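(* For a regular dimension-reduced canonical form, the infimal value $\underline L^*$ and solution set $\widehat W$ are as follows. (a) If the problem is non-Lagrangian, then $W_\circ=W_1=\emptyset$, $W=\{0_q\}$, and $\underline L^*=\sum_{i=1}^q\gamma_i^{-2}l_i^2>0$ is attained on $\widehat W=\{0_q\}$. (b) If it is multiply-Lagrangian, then $\underline L^*=0$, attained on $\widehat W=W_\circ=W_1=\{0_q\}$, and also $W_q=\{0_q\}$ when $\gamma_q<0$. (c) If it is singly-Lagrangian, then $\widehat W$ is the unique nonempty member of $\{W_\circ,W_1,W_q\}$ (with $W_q$ considered only if $\gamma_q<0$). Specifically: if $\gamma_q>0$, then $\underline f<0$, and $\widehat W=W_\circ$ if $\overline f>0$, $\widehat W=W_1$ if $\overline f\le0$; if $\gamma_q<0$, then $\widehat W=W_\circ$, $W_1$ or $W_q$ according as $\underline f<0<\overline f$, $\overline f\le0$, or $\underline f\ge0$. When $\widehat W=W_\circ$: $\underline L^*=\hat\lambda^2\{l_0^2+\sum_{i=1}^q(1-\hat\lambda\gamma_i)^{-2}l_i^2\}$, attained uniquely at $w=w(\hat\lambda)$, where $\hat\lambda$ is the unique solution of $f(\lambda)=0$ in $\Lambda^\circ$. When $\widehat W=W_1$: $\underline L^*=\gamma_1^{-2}\{l_0^2+\sum_{i=2}^q(1-\gamma_i/\gamma_1)^{-2}l_i^2\}+\zeta_1^2$, attained at $w=(\hat y_1,\pm\zeta_1,\hat z_{(1)}^\top)^\top$, where $\zeta_1=\sqrt{-f_1/\gamma_1}\ge0$. When $\widehat W=W_q$: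 $\underline L^*=\gamma_q^{-2}\{l_0^2+\sum_{i=1}^{q-1}(1-\gamma_i/\gamma_q)^{-2}l_i^2\}+\zeta_q^2$, attained at $w=(\hat y_q,\hat z_{(q)}^\top,\pm\zeta_q)^\top$, where $\zeta_q=\sqrt{f_q/(-\gamma_q)}\ge0$. (Coordinates $\hat y_1,\hat y_q$ are absent when $m_0=0$.)
   Context: Regular dimension-reduced canonical form: $q\ge1$, $\gamma_1>\dots>\gamma_q$ nonzero reals with $\gamma_1>0$, $\Gamma^*=\operatorname{diag}(\gamma_1,\dots,\gamma_q)$, $\delta=(\delta_i)$ with $\delta_i\ge0$, $k^*\in\mathbb{R}$, $\varepsilon\ge0$; either ($m_0=0$) $\varepsilon=0$, $w=z\in\mathbb{R}^q$, $w_0=\delta$, $\Delta=\Gamma^*$, $d=0$; or ($m_0>0$) $\varepsilon>0$, $w=(y,z^\top)^\top\in\mathbb{R}^{q+1}$, $w_0=(0,\delta^\top)^\top$, $\Delta=\operatorname{diag}(0,\Gamma^* )$, $d=\varepsilon e_1$. Problem: minimise $L^*(w)=\|w-w_0\|^2$ over $W=\{w:Q^*(w)=0\}\neq\emptyset$, $Q^*(w)=w^\top\Delta w+2d^\top w-k^*$; $\underline L^*=\inf_WL^*$, $\widehat W$ the set of minimisers. Let $l_0=\varepsilon$ and $l_i=|\gamma_i|\delta_i$. Admissible region $\Lambda=(-\infty,\gamma_1^{-1}]$ if $\gamma_q>0$, $[\gamma_q^{-1},\gamma_1^{-1}]$ if $\gamma_q<0$; $\Lambda^\circ$ its interior. $W(\lambda)$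 is the set of $w\in W$ with $(I-\lambda\Delta)w=w_0+\lambda d$; $W_\circ=\bigcup_{\lambda\in\Lambda^\circ}W(\lambda)$, $W_1=W(\gamma_1^{-1})$, and (only if $\gamma_q<0$) $W_q=W(\gamma_q^{-1})$. For $\lambda\in\Lambda^\circ$: $w(\lambda)=(I-\lambda\Delta)^{-1}(w_0+\lambda d)$, $f(\lambda)=\sum_{i=1}^q(1-\lambda\gamma_i)^{-2}\gamma_i\delta_i^2+2\varepsilon^2\lambda-k^*$; $\underline f=\inf_{\Lambda^\circ}f$, $\overline f=\sup_{\Lambda^\circ}f$. Boundary quantities: $\hat y_1=\varepsilon\gamma_1^{-1}$, $\hat z_{(1)}\in\mathbb{R}^{q-1}$ with entries $(1-\gamma_i/\gamma_1)^{-1}\delta_i$ ($i=2,\dots,q$), $f_1=\sum_{i=2}^q\gamma_i(\hat z_{(1)})_i^2+2\varepsilon\hat y_1-k^*$; when $\gamma_q<0$: $\hat y_q=\varepsilon\gamma_q^{-1}$, $\hat z_{(q)}$ with entries $(1-\gamma_i/\gamma_q)^{-1}\delta_i$ ($i=1,\dots,q-1$), $f_q=\sum_{i=1}^{q-1}\gamma_i(\hat z_{(q)})_i^2+2\varepsilon\hat y_q-k^*$. The problem is non-Lagrangian if $m_0=0$, $k^*=0$, $\delta\neq0_q$ and $\gamma_q>0$; multiply-Lagrangian if $m_0=0$, $k^*=0$ and $\delta=0_q$; singly-Lagrangian otherwise. *)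

theory Defs
  imports "HOL-Analysis.Analysis"
begin

text \<open>Index 0 is the y-coordinate
 (present only when m0 > 0, i.e. eps > 0), indices 1..q are the z-coordinates.\<close>

definition Jset :: "nat \<Rightarrow> real \<Rightarrow> nat set" where
  "Jset q eps = (if eps = 0 then {1..q} else {0..q})"

definition Vsp :: "nat \<Rightarrow> real \<Rightarrow> (nat \<Rightarrow> real) set" where
  "Vsp q eps = {w. \<forall>i. i \<notin> Jset q eps \<longrightarrow> w i = 0}"

text \<open>w_0 = (0, delta), diagonal of Delta = (0, Gamma), d = eps e_1.\<close>
definition w0v :: "nat \<Rightarrow> (nat \<Rightarrow> real) \<Rightarrow> nat \<Rightarrow> real" where
  "w0v q \<delta> i = (if 1 \<le> i \<and> i \<le> q then \<delta> i else 0)"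

definition Dlt :: "nat \<Rightarrow> (nat \<Rightarrow> real) \<Rightarrow> nat \<Rightarrow> real" where
  "Dlt q \<gamma> i = (if 1 \<le> i \<and> i \<le> q then \<gamma> i else 0)"

definition dv :: "real \<Rightarrow> nat \<Rightarrow> real" where
  "dv eps i = (if i = 0 then eps else 0)"

definition Qf :: "nat \<Rightarrow> (nat \<Rightarrow> real) \<Rightarrow> real \<Rightarrow> real \<Rightarrow> (nat \<Rightarrow> real) \<Rightarrow> real" where
  "Qf q \<gamma> eps k w = (\<Sum>i\<in>Jset q eps. Dlt q \<gamma> i * (w i)^2) + 2 * (\<Sum>i\<in>Jset q eps. dv eps i * w i) - k"

definition Lf :: "nat \<Rightarrow> (nat \<Rightarrow> real) \<Rightarrow> real \<Rightarrow> (nat \<Rightarrow> real) \<Rightarrow> real" where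
  "Lf q \<delta> eps w = (\<Sum>i\<in>Jset q eps. (w i - w0v q \<delta> i)^2)"

definition Wset :: "nat \<Rightarrow> (nat \<Rightarrow> real) \<Rightarrow> real \<Rightarrow> real \<Rightarrow> (nat \<Rightarrow> real) set" where
  "Wset q \<gamma> eps k = {w \<in> Vsp q eps. Qf q \<gamma> eps k w = 0}"

definition Linf :: "nat \<Rightarrow> (nat \<Rightarrow> real) \<Rightarrow> (nat \<Rightarrow> real) \<Rightarrow> real \<Rightarrow> real \<Rightarrow> real" where
  "Linf q \<gamma> \<delta> eps k = Inf (Lf q \<delta> eps ` Wset q \<gamma> eps k)"

definition What :: "nat \<Rightarrow> (nat \<Rightarrow> real) \<Rightarrow> (nat \<Rightarrow> real) \<Rightarrow> real \<Rightarrow> real \<Rightarrow> (nat \<Rightarrow> real) set" where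
  "What q \<gamma> \<delta> eps k = {w \<in> Wset q \<gamma> eps k. Lf q \<delta> eps w = Linf q \<gamma> \<delta> eps k}"

definition LamSet :: "nat \<Rightarrow> (nat \<Rightarrow> real) \<Rightarrow> real set" where
  "LamSet q \<gamma> = (if \<gamma> q > 0 then {..inverse (\<gamma> 1)} else {inverse (\<gamma> q)..inverse (\<gamma> 1)})"

definition Wlam :: "nat \<Rightarrow> (nat \<Rightarrow> real) \<Rightarrow> (nat \<Rightarrow> real) \<Rightarrow> real \<Rightarrow> real \<Rightarrow> real \<Rightarrow> (nat \<Rightarrow> real) set" where
  "Wlam q \<gamma> \<delta> eps k lam = {w \<in> Wset q \<gamma> eps k.
     \<forall>i\<in>Jset q eps. (1 - lam * Dlt q \<gamma> i) * w i = w0v q \<delta> i + lam * dv eps i}"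

definition Wcirc :: "nat \<Rightarrow> (nat \<Rightarrow> real) \<Rightarrow> (nat \<Rightarrow> real) \<Rightarrow> real \<Rightarrow> real \<Rightarrow> (nat \<Rightarrow> real) set" where
  "Wcirc q \<gamma> \<delta> eps k = (\<Union>lam\<in>interior (LamSet q \<gamma>). Wlam q \<gamma> \<delta> eps k lam)"

definition W1 :: "nat \<Rightarrow> (nat \<Rightarrow> real) \<Rightarrow> (nat \<Rightarrow> real) \<Rightarrow> real \<Rightarrow> real \<Rightarrow> (nat \<Rightarrow> real) set" where
  "W1 q \<gamma> \<delta> eps k = Wlam q \<gamma> \<delta> eps k (inverse (\<gamma> 1))"

definition Wq :: "nat \<Rightarrow> (nat \<Rightarrow> real) \<Rightarrow> (nat \<Rightarrow> real) \<Rightarrow> real \<Rightarrow> real \<Rightarrow> (nat \<Rightarrow> real) set" where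
  "Wq q \<gamma> \<delta> eps k = Wlam q \<gamma> \<delta> eps k (inverse (\<gamma> q))"

definition wlam :: "nat \<Rightarrow> (nat \<Rightarrow> real) \<Rightarrow> (nat \<Rightarrow> real) \<Rightarrow> real \<Rightarrow> real \<Rightarrow> nat \<Rightarrow> real" where
  "wlam q \<gamma> \<delta> eps lam i =
     (if i \<in> Jset q eps then inverse (1 - lam * Dlt q \<gamma> i) * (w0v q \<delta> i + lam * dv eps i) else 0)"

definition ff :: "nat \<Rightarrow> (nat \<Rightarrow> real) \<Rightarrow> (nat \<Rightarrow> real) \<Rightarrow> real \<Rightarrow> real \<Rightarrow> real \<Rightarrow> real" where
  "ff q \<gamma> \<delta> eps k lam =
     (\<Sum>i=1..q. inverse ((1 - lam * \<gamma> i)^2) * \<gamma> i * (\<delta> i)^2) + 2 * eps^2 * lam - k"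

definition finf :: "nat \<Rightarrow> (nat \<Rightarrow> real) \<Rightarrow> (nat \<Rightarrow> real) \<Rightarrow> real \<Rightarrow> real \<Rightarrow> ereal" where
  "finf q \<gamma> \<delta> eps k = (INF lam\<in>interior (LamSet q \<gamma>). ereal (ff q \<gamma> \<delta> eps k lam))"

definition fsup :: "nat \<Rightarrow> (nat \<Rightarrow> real) \<Rightarrow> (nat \<Rightarrow> real) \<Rightarrow> real \<Rightarrow> real \<Rightarrow> ereal" where
  "fsup q \<gamma> \<delta> eps k = (SUP lam\<in>interior (LamSet q \<gamma>). ereal (ff q \<gamma> \<delta> eps k lam))"

definition lc :: "(nat \<Rightarrow> real) \<Rightarrow> (nat \<Rightarrow> real) \<Rightarrow> real \<Rightarrow> nat \<Rightarrow> real" where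
  "lc \<gamma> \<delta> eps i = (if i = 0 then eps else \<bar>\<gamma> i\<bar> * \<delta> i)"

text \<open>Boundary quantities at lambda = 1/gamma_1.\<close>
definition yhat1 :: "(nat \<Rightarrow> real) \<Rightarrow> real \<Rightarrow> real" where
  "yhat1 \<gamma> eps = eps * inverse (\<gamma> 1)"

definition zhat1 :: "(nat \<Rightarrow> real) \<Rightarrow> (nat \<Rightarrow> real) \<Rightarrow> nat \<Rightarrow> real" where
  "zhat1 \<gamma> \<delta> i = inverse (1 - \<gamma> i / \<gamma> 1) * \<delta> i"

definition f1 :: "nat \<Rightarrow> (nat \<Rightarrow> real) \<Rightarrow> (nat \<Rightarrow> real) \<Rightarrow> real \<Rightarrow> real \<Rightarrow> real" where
  "f1 q \<gamma> \<delta> eps k = (\<Sum>i=2..q. \<gamma> i * (zhat1 \<gamma> \<delta> i)^2) + 2 * eps * yhat1 \<gamma> eps - k"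

definition pt1 :: "nat \<Rightarrow> (nat \<Rightarrow> real) \<Rightarrow> (nat \<Rightarrow> real) \<Rightarrow> real \<Rightarrow> real \<Rightarrow> nat \<Rightarrow> real" where
  "pt1 q \<gamma> \<delta> eps s i =
     (if i = 0 then (if eps = 0 then 0 else yhat1 \<gamma> eps)
      else if i = 1 then s
      else if 2 \<le> i \<and> i \<le> q then zhat1 \<gamma> \<delta> i else 0)"

text \<open>Boundary quantities at lambda = 1/gamma_q.\<close>
definition yhatq :: "nat \<Rightarrow> (nat \<Rightarrow> real) \<Rightarrow> real \<Rightarrow> real" where
  "yhatq q \<gamma> eps = eps * inverse (\<gamma> q)"

definition zhatq :: "nat \<Rightarrow> (nat \<Rightarrow> real) \<Rightarrow> (nat \<Rightarrow> real) \<Rightarrow> nat \<Rightarrow> real" where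
  "zhatq q \<gamma> \<delta> i = inverse (1 - \<gamma> i / \<gamma> q) * \<delta> i"

definition fq :: "nat \<Rightarrow> (nat \<Rightarrow> real) \<Rightarrow> (nat \<Rightarrow> real) \<Rightarrow> real \<Rightarrow> real \<Rightarrow> real" where
  "fq q \<gamma> \<delta> eps k = (\<Sum>i=1..q-1. \<gamma> i * (zhatq q \<gamma> \<delta> i)^2) + 2 * eps * yhatq q \<gamma> eps - k"

definition ptq :: "nat \<Rightarrow> (nat \<Rightarrow> real) \<Rightarrow> (nat \<Rightarrow> real) \<Rightarrow> real \<Rightarrow> real \<Rightarrow> nat \<Rightarrow> real" where
  "ptq q \<gamma> \<delta> eps s i =
     (if i = 0 then (if eps = 0 then 0 else yhatq q \<gamma> eps)
      else if i = q then s
      else if 1 \<le> i \<and> i < q then zhatq q \<gamma> \<delta> i else 0)"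

text \<open>Classification (m0 = 0 iff eps = 0).\<close>
definition nonLagrangian :: "nat \<Rightarrow> (nat \<Rightarrow> real) \<Rightarrow> (nat \<Rightarrow> real) \<Rightarrow> real \<Rightarrow> real \<Rightarrow> bool" where
  "nonLagrangian q \<gamma> \<delta> eps k \<longleftrightarrow> eps = 0 \<and> k = 0 \<and> (\<exists>i\<in>{1..q}. \<delta> i \<noteq> 0) \<and> \<gamma> q > 0"

definition multLagrangian :: "nat \<Rightarrow> (nat \<Rightarrow> real) \<Rightarrow> (nat \<Rightarrow> real) \<Rightarrow> real \<Rightarrow> real \<Rightarrow> bool" where
  "multLagrangian q \<gamma> \<delta> eps k \<longleftrightarrow> eps = 0 \<and> k = 0 \<and> (\<forall>i\<in>{1..q}. \<delta> i = 0)"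

definition singLagrangian :: "nat \<Rightarrow> (nat \<Rightarrow> real) \<Rightarrow> (nat \<Rightarrow> real) \<Rightarrow> real \<Rightarrow> real \<Rightarrow> bool" where
  "singLagrangian q \<gamma> \<delta> eps k \<longleftrightarrow>
     \<not> nonLagrangian q \<gamma> \<delta> eps k \<and> \<not> multLagrangian q \<gamma> \<delta> eps k"

end

theory Submission
  imports Defs
begin


locale cf =
  fixes q :: nat and \<gamma> \<delta> :: "nat \<Rightarrow> real" and k eps :: real
  assumes q: "q \<ge> 1"
    and dec: "\<forall>i j. 1 \<le> i \<longrightarrow> i < j \<longrightarrow> j \<le> q \<longrightarrow> \<gamma> j < \<gamma> i"
    and nz: "\<forall>i\<in>{1..q}. \<gamma> i \<noteq> 0"
    and g1: "\<gamma> 1 > 0"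
    and dpos: "\<forall>i\<in>{1..q}. \<delta> i \<ge> 0"
    and epos: "eps \<ge> 0"
begin

lemma glt: "1 \<le> i \<Longrightarrow> i < j \<Longrightarrow> j \<le> q \<Longrightarrow> \<gamma> j < \<gamma> i"
  using dec by blast
lemma gle: "1 \<le> i \<Longrightarrow> i \<le> j \<Longrightarrow> j \<le> q \<Longrightarrow> \<gamma> j \<le> \<gamma> i"
  using glt[of i j] by (cases "i = j") auto
lemma gnz: "i \<in> {1..q} \<Longrightarrow> \<gamma> i \<noteq> 0" using nz by blast
lemma dnn: "i \<in> {1..q} \<Longrightarrow> \<delta> i \<ge> 0" using dpos by blast
lemma gqnz: "\<gamma> q \<noteq> 0" using gnz q by auto

lemma sumJ: "(\<Sum>i\<in>Jset q eps. F i) = (if eps = 0 then 0 else F 0) + (\<Sum>i=1..q. F i)"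
proof (cases "eps = 0")
  case True then show ?thesis by (simp add: Jset_def)
next
  case False
  have "{0..q} = insert 0 {1..q}" by auto
  then show ?thesis using False by (simp add: Jset_def)
qed

lemma Vsp_iff: "w \<in> Vsp q eps \<longleftrightarrow> (\<forall>i. q < i \<longrightarrow> w i = 0) \<and> (eps = 0 \<longrightarrow> w 0 = 0)"
  unfolding Vsp_def Jset_def by (auto simp: not_less_eq_eq)

lemma Qf_eq: "Qf q \<gamma> eps k w = (\<Sum>i=1..q. \<gamma> i * (w i)^2) + 2*eps*w 0 - k"
proof -
  have a: "(\<Sum>i=1..q. Dlt q \<gamma> i * (w i)^2) = (\<Sum>i=1..q. \<gamma> i * (w i)^2)"
    by (rule sum.cong) (auto simp: Dlt_def)
  have b: "(\<Sum>i=1..q. dv eps i * w i) = 0"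
    by (rule sum.neutral) (auto simp: dv_def)
  show ?thesis unfolding Qf_def sumJ a b by (simp add: Dlt_def dv_def)
qed

lemma Lf_eq: "w \<in> Vsp q eps \<Longrightarrow> Lf q \<delta> eps w = (w 0)^2 + (\<Sum>i=1..q. (w i - \<delta> i)^2)"
proof -
  assume w: "w \<in> Vsp q eps"
  have a: "(\<Sum>i=1..q. (w i - w0v q \<delta> i)^2) = (\<Sum>i=1..q. (w i - \<delta> i)^2)"
    by (rule sum.cong) (auto simp: w0v_def)
  show ?thesis unfolding Lf_def sumJ a using w by (auto simp: w0v_def Vsp_iff)
qed

lemma Wlam_iff: "w \<in> Wlam q \<gamma> \<delta> eps k lam \<longleftrightarrow> w \<in> Vsp q eps \<and> Qf q \<gamma> eps k w = 0 \<and>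
   w 0 = lam * eps \<and> (\<forall>i\<in>{1..q}. (1 - lam * \<gamma> i) * w i = \<delta> i)"
  unfolding Wlam_def Wset_def Jset_def Vsp_iff
  by (auto simp: Dlt_def w0v_def dv_def Vsp_iff not_less_eq_eq)

lemma intLam: "interior (LamSet q \<gamma>) = (if \<gamma> q > 0 then {..<inverse (\<gamma> 1)} else {inverse (\<gamma> q)<..<inverse (\<gamma> 1)})"
  unfolding LamSet_def by auto

lemma Lam_nonneg: assumes "lam \<in> LamSet q \<gamma>" "i \<in> {1..q}" shows "1 - lam * \<gamma> i \<ge> 0"
proof -
  have gi: "\<gamma> i \<le> \<gamma> 1" "\<gamma> q \<le> \<gamma> i" using gle[of 1 i] gle[of i q] assms(2) by auto
  have n: "\<gamma> i \<noteq> 0" using gnz assms(2) .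
  show ?thesis
  proof (cases "\<gamma> i > 0")
    case True
    have "lam \<le> inverse (\<gamma> 1)" using assms(1) by (auto simp: LamSet_def split: if_splits)
    hence "lam * \<gamma> i \<le> inverse (\<gamma> 1) * \<gamma> i" using True by (simp add: mult_right_mono)
    also have "\<dots> \<le> 1" using gi g1 True by (simp add: field_simps)
    finally show ?thesis by simp
  next
    case False
    hence neg: "\<gamma> i < 0" using n by simp
    hence gq: "\<gamma> q < 0" using gi by simp
    have "lam \<ge> inverse (\<gamma> q)" using assms(1) gq by (auto simp: LamSet_def split: if_splits)
    hence "lam * \<gamma> i \<le> inverse (\<gamma> q) * \<gamma> i" using neg by (simp add: mult_right_mono_neg)
    also have "\<dots> \<le> 1" using gi gq neg by (simp add: field_simps)
    finally show ?thesis by simp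
  qed
qed

lemma Lam_pos: assumes "lam \<in> interior (LamSet q \<gamma>)" "i \<in> {1..q}" shows "1 - lam * \<gamma> i > 0"
proof -
  have gi: "\<gamma> i \<le> \<gamma> 1" "\<gamma> q \<le> \<gamma> i" using gle[of 1 i] gle[of i q] assms(2) by auto
  have n: "\<gamma> i \<noteq> 0" using gnz assms(2) .
  show ?thesis
  proof (cases "\<gamma> i > 0")
    case True
    have "lam < inverse (\<gamma> 1)" using assms(1) by (auto simp: intLam split: if_splits)
    hence "lam * \<gamma> i < inverse (\<gamma> 1) * \<gamma> i" using True by (simp add: mult_strict_right_mono)
    also have "\<dots> \<le> 1" using gi g1 True by (simp add: field_simps)
    finally show ?thesis by simp
  next
    case False
    hence neg: "\<gamma> i < 0" using n by simp
    hence gq: "\<gamma> q < 0" using gi by simp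
    have "lam > inverse (\<gamma> q)" using assms(1) gq by (auto simp: intLam split: if_splits)
    hence "lam * \<gamma> i < inverse (\<gamma> q) * \<gamma> i" using neg by (simp add: mult_strict_right_mono_neg)
    also have "\<dots> \<le> 1" using gi gq neg by (simp add: field_simps)
    finally show ?thesis by simp
  qed
qed

lemma int_sub: "interior (LamSet q \<gamma>) \<subseteq> LamSet q \<gamma>" by (rule interior_subset)
lemma zero_int: "0 \<in> interior (LamSet q \<gamma>)"
  using g1 gqnz by (auto simp: intLam)
lemma inv1_Lam: "inverse (\<gamma> 1) \<in> LamSet q \<gamma>"
proof -
  have "\<gamma> q < 0 \<Longrightarrow> inverse (\<gamma> q) \<le> inverse (\<gamma> 1)"
  proof -
    assume "\<gamma> q < 0" hence "inverse (\<gamma> q) < 0" by simp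
    moreover have "0 < inverse (\<gamma> 1)" using g1 by simp
    ultimately show ?thesis by linarith
  qed
  thus ?thesis using gqnz by (auto simp: LamSet_def)
qed
lemma invq_Lam: "\<gamma> q < 0 \<Longrightarrow> inverse (\<gamma> q) \<in> LamSet q \<gamma>"
proof -
  assume a: "\<gamma> q < 0" hence "inverse (\<gamma> q) < 0" by simp
  moreover have "0 < inverse (\<gamma> 1)" using g1 by simp
  ultimately have "inverse (\<gamma> q) \<le> inverse (\<gamma> 1)" by linarith
  thus ?thesis using a by (auto simp: LamSet_def)
qed

end

context cf begin

lemma key_id:
  assumes w: "w \<in> Vsp q eps" and u: "u \<in> Vsp q eps" and u0: "u 0 = lam * eps"
    and ui: "\<forall>i\<in>{1..q}. (1 - lam * \<gamma> i) * u i = \<delta> i"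
  shows "Lf q \<delta> eps w - lam * Qf q \<gamma> eps k w = Lf q \<delta> eps u - lam * Qf q \<gamma> eps k u
     + (w 0 - u 0)^2 + (\<Sum>i=1..q. (1 - lam * \<gamma> i) * (w i - u i)^2)"
proof -
  have per: "(w i - \<delta> i)^2 - lam * (\<gamma> i * (w i)^2) =
      ((u i - \<delta> i)^2 - lam * (\<gamma> i * (u i)^2)) + (1 - lam * \<gamma> i) * (w i - u i)^2"
    if "i \<in> {1..q}" for i
  proof -
    have d: "\<delta> i = (1 - lam * \<gamma> i) * u i" using ui that by auto
    show ?thesis unfolding d power2_eq_square by algebra
  qed
  have S: "(\<Sum>i=1..q. (w i - \<delta> i)^2 - lam * (\<gamma> i * (w i)^2)) =
     (\<Sum>i=1..q. (u i - \<delta> i)^2 - lam * (\<gamma> i * (u i)^2)) + (\<Sum>i=1..q. (1 - lam * \<gamma> i) * (w i - u i)^2)"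
    by (simp add: per sum.distrib[symmetric])
  have E: "Lf q \<delta> eps v - lam * Qf q \<gamma> eps k v = (v 0)^2 - 2*lam*eps * v 0 + lam*k +
      (\<Sum>i=1..q. (v i - \<delta> i)^2 - lam * (\<gamma> i * (v i)^2))" if "v \<in> Vsp q eps" for v
    using that by (simp add: Lf_eq Qf_eq sum_subtractf sum_distrib_left algebra_simps)
  show ?thesis unfolding E[OF w] E[OF u] S using u0 by (simp add: power2_eq_square algebra_simps)
qed

lemma G:
  assumes lam: "lam \<in> LamSet q \<gamma>" and u: "u \<in> Wlam q \<gamma> \<delta> eps k lam"
  shows "What q \<gamma> \<delta> eps k = Wlam q \<gamma> \<delta> eps k lam" "Linf q \<gamma> \<delta> eps k = Lf q \<delta> eps u"
proof -
  from u have uV: "u \<in> Vsp q eps" and uQ: "Qf q \<gamma> eps k u = 0" and u0: "u 0 = lam * eps"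
    and ui: "\<forall>i\<in>{1..q}. (1 - lam * \<gamma> i) * u i = \<delta> i" by (auto simp: Wlam_iff)
  have nn: "\<forall>i\<in>{1..q}. 1 - lam * \<gamma> i \<ge> 0" using Lam_nonneg[OF lam] by blast
  have ineq: "Lf q \<delta> eps w = Lf q \<delta> eps u + ((w 0 - u 0)^2 + (\<Sum>i=1..q. (1 - lam * \<gamma> i) * (w i - u i)^2))"
    if "w \<in> Wset q \<gamma> eps k" for w
  proof -
    have wV: "w \<in> Vsp q eps" and wQ: "Qf q \<gamma> eps k w = 0" using that by (auto simp: Wset_def)
    show ?thesis using key_id[OF wV uV u0 ui] wQ uQ by simp
  qed
  have R: "(w 0 - u 0)^2 + (\<Sum>i=1..q. (1 - lam * \<gamma> i) * (w i - u i)^2) \<ge> 0" for w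
    using nn by (intro add_nonneg_nonneg sum_nonneg) auto
  have uW: "u \<in> Wset q \<gamma> eps k" using uV uQ by (simp add: Wset_def)
  have Li: "Linf q \<gamma> \<delta> eps k = Lf q \<delta> eps u"
    unfolding Linf_def
  proof (rule cInf_eq_minimum)
    show "Lf q \<delta> eps u \<in> Lf q \<delta> eps ` Wset q \<gamma> eps k" using uW by (rule imageI)
    fix x assume "x \<in> Lf q \<delta> eps ` Wset q \<gamma> eps k"
    then obtain w where w: "w \<in> Wset q \<gamma> eps k" and x: "x = Lf q \<delta> eps w" by blast
    show "Lf q \<delta> eps u \<le> x" unfolding x ineq[OF w] using R[of w] by linarith
  qed
  show "Linf q \<gamma> \<delta> eps k = Lf q \<delta> eps u" by (rule Li)
  show "What q \<gamma> \<delta> eps k = Wlam q \<gamma> \<delta> eps k lam"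
  proof
    show "What q \<gamma> \<delta> eps k \<subseteq> Wlam q \<gamma> \<delta> eps k lam"
    proof
      fix w assume "w \<in> What q \<gamma> \<delta> eps k"
      hence wW: "w \<in> Wset q \<gamma> eps k" and wL: "Lf q \<delta> eps w = Lf q \<delta> eps u"
        using Li by (auto simp: What_def)
      have z: "(w 0 - u 0)^2 + (\<Sum>i=1..q. (1 - lam * \<gamma> i) * (w i - u i)^2) = 0"
        using ineq[OF wW] wL by simp
      have s0: "(\<Sum>i=1..q. (1 - lam * \<gamma> i) * (w i - u i)^2) \<ge> 0" using nn by (intro sum_nonneg) auto
      have "(w 0 - u 0)^2 = 0" using z s0 zero_le_power2[of "w 0 - u 0"] by linarith
      hence w0: "w 0 = u 0" by simp
      have s: "(\<Sum>i=1..q. (1 - lam * \<gamma> i) * (w i - u i)^2) = 0" using z w0 by simp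
      have each: "(1 - lam * \<gamma> i) * (w i - u i)^2 = 0" if "i \<in> {1..q}" for i
      proof -
        have "\<And>x. x\<in>{1..q} \<Longrightarrow> 0 \<le> (1 - lam * \<gamma> x) * (w x - u x)^2" using nn by simp
        hence "(sum (\<lambda>x. (1 - lam * \<gamma> x) * (w x - u x)^2) {1..q} = 0) = (\<forall>x\<in>{1..q}. (1 - lam * \<gamma> x) * (w x - u x)^2 = 0)"
          using sum_nonneg_eq_0_iff[of "{1..q}" "\<lambda>x. (1 - lam * \<gamma> x) * (w x - u x)^2"] by simp
        with s that show ?thesis by blast
      qed
      have eq: "(1 - lam * \<gamma> i) * w i = \<delta> i" if "i \<in> {1..q}" for i
      proof -
        have "(1 - lam * \<gamma> i) * (w i - u i) = 0"
          using each[OF that] by (auto simp: power2_eq_square)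
        moreover have "(1 - lam*\<gamma> i)*w i = (1-lam*\<gamma> i)*u i + (1 - lam*\<gamma> i)*(w i - u i)"
          by (simp add: algebra_simps)
        moreover have "(1-lam*\<gamma> i)*u i = \<delta> i" using ui that by blast
        ultimately show ?thesis by simp
      qed
      show "w \<in> Wlam q \<gamma> \<delta> eps k lam"
        using wW w0 u0 eq by (auto simp: Wlam_iff Wset_def)
    qed
    show "Wlam q \<gamma> \<delta> eps k lam \<subseteq> What q \<gamma> \<delta> eps k"
    proof
      fix w assume w: "w \<in> Wlam q \<gamma> \<delta> eps k lam"
      hence wW: "w \<in> Wset q \<gamma> eps k" and w0: "w 0 = lam * eps"
        and wi: "\<forall>i\<in>{1..q}. (1 - lam * \<gamma> i) * w i = \<delta> i" by (auto simp: Wlam_iff Wset_def)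
      have "(\<Sum>i=1..q. (1 - lam * \<gamma> i) * (w i - u i)^2) = 0"
      proof (rule sum.neutral, rule ballI)
        fix i assume i: "i \<in> {1..q}"
        have a: "(1 - lam * \<gamma> i) * w i = \<delta> i" "(1 - lam * \<gamma> i) * u i = \<delta> i" using wi ui i by auto
        have "(1 - lam * \<gamma> i) * (w i - u i) = (1 - lam * \<gamma> i) * w i - (1 - lam * \<gamma> i) * u i"
          by (simp add: algebra_simps)
        hence "(1 - lam * \<gamma> i) * (w i - u i) = 0" using a by simp
        thus "(1 - lam * \<gamma> i) * (w i - u i)^2 = 0" by (simp add: power2_eq_square)
      qed
      thus "w \<in> What q \<gamma> \<delta> eps k" using ineq[OF wW] w0 u0 Li wW by (simp add: What_def)
    qed
  qed
qed

lemma Wcirc_eq: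
  assumes "Wcirc q \<gamma> \<delta> eps k \<noteq> {}"
  shows "Wcirc q \<gamma> \<delta> eps k = What q \<gamma> \<delta> eps k"
proof -
  obtain lam w where lam: "lam \<in> interior (LamSet q \<gamma>)" and w: "w \<in> Wlam q \<gamma> \<delta> eps k lam"
    using assms by (auto simp: Wcirc_def)
  have Wh: "What q \<gamma> \<delta> eps k = Wlam q \<gamma> \<delta> eps k lam" using G(1)[OF subsetD[OF int_sub lam] w] .
  show ?thesis
  proof
    show "Wcirc q \<gamma> \<delta> eps k \<subseteq> What q \<gamma> \<delta> eps k"
    proof
      fix v assume "v \<in> Wcirc q \<gamma> \<delta> eps k"
      then obtain l where l: "l \<in> interior (LamSet q \<gamma>)" and v: "v \<in> Wlam q \<gamma> \<delta> eps k l"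
        by (auto simp: Wcirc_def)
      show "v \<in> What q \<gamma> \<delta> eps k" using G(1)[OF subsetD[OF int_sub l] v] v by simp
    qed
    show "What q \<gamma> \<delta> eps k \<subseteq> Wcirc q \<gamma> \<delta> eps k" using Wh lam by (auto simp: Wcirc_def)
  qed
qed

lemma two_lam:
  assumes "l1 \<noteq> l2" "w \<in> Wlam q \<gamma> \<delta> eps k l1" "w \<in> Wlam q \<gamma> \<delta> eps k l2"
  shows "multLagrangian q \<gamma> \<delta> eps k"
proof -
  have e: "eps = 0" using assms by (auto simp: Wlam_iff)
  have wi: "w i = 0 \<and> \<delta> i = 0" if i: "i \<in> {1..q}" for i
  proof -
    have "(1 - l1 * \<gamma> i) * w i = (1 - l2 * \<gamma> i) * w i" using assms i by (auto simp: Wlam_iff)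
    hence "(l2 - l1) * (\<gamma> i * w i) = 0" by (simp add: algebra_simps)
    hence "w i = 0" using assms(1) gnz[OF i] by simp
    moreover have "(1 - l1 * \<gamma> i) * w i = \<delta> i" using assms i by (auto simp: Wlam_iff)
    ultimately show ?thesis by simp
  qed
  have "Qf q \<gamma> eps k w = 0" using assms by (auto simp: Wlam_iff)
  moreover have "(\<Sum>i=1..q. \<gamma> i * (w i)^2) = 0" by (rule sum.neutral) (use wi in auto)
  ultimately have "k = 0" using e Qf_eq[of w] by simp
  thus ?thesis using e wi by (auto simp: multLagrangian_def)
qed

end

context cf begin

lemma wlam_V: "wlam q \<gamma> \<delta> eps lam \<in> Vsp q eps"
  by (auto simp: Vsp_iff wlam_def Jset_def)
lemma wlam0: "wlam q \<gamma> \<delta> eps lam 0 = lam * eps"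
  by (auto simp: wlam_def Jset_def Dlt_def w0v_def dv_def)
lemma wlami: "i \<in> {1..q} \<Longrightarrow> wlam q \<gamma> \<delta> eps lam i = inverse (1 - lam * \<gamma> i) * \<delta> i"
  by (auto simp: wlam_def Jset_def Dlt_def w0v_def dv_def)

lemma Qf_wlam: assumes "lam \<in> interior (LamSet q \<gamma>)"
  shows "Qf q \<gamma> eps k (wlam q \<gamma> \<delta> eps lam) = ff q \<gamma> \<delta> eps k lam"
proof -
  have "(\<Sum>i=1..q. \<gamma> i * (wlam q \<gamma> \<delta> eps lam i)^2) = (\<Sum>i=1..q. inverse ((1 - lam * \<gamma> i)^2) * \<gamma> i * (\<delta> i)^2)"
    by (rule sum.cong) (auto simp: wlami power_mult_distrib power_inverse)
  thus ?thesis by (simp add: Qf_eq wlam0 ff_def power2_eq_square)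
qed

lemma Wlam_int: assumes lam: "lam \<in> interior (LamSet q \<gamma>)"
  shows "Wlam q \<gamma> \<delta> eps k lam = (if ff q \<gamma> \<delta> eps k lam = 0 then {wlam q \<gamma> \<delta> eps lam} else {})"
proof -
  have uniq: "w = wlam q \<gamma> \<delta> eps lam" if w: "w \<in> Wlam q \<gamma> \<delta> eps k lam" for w
  proof
    fix i
    show "w i = wlam q \<gamma> \<delta> eps lam i"
    proof (cases "i = 0")
      case True thus ?thesis using w by (simp add: Wlam_iff wlam0)
    next
      case False
      show ?thesis
      proof (cases "i \<le> q")
        case True
        hence i: "i \<in> {1..q}" using False by auto
        have p: "1 - lam * \<gamma> i > 0" using Lam_pos[OF lam i] .
        have "(1 - lam * \<gamma> i) * w i = \<delta> i" using w i by (auto simp: Wlam_iff)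
        hence "w i = inverse (1 - lam * \<gamma> i) * \<delta> i" using p by (auto simp: field_simps)
        thus ?thesis using wlami[OF i] by simp
      next
        case False
        thus ?thesis using w wlam_V[of lam] by (auto simp: Wlam_iff Vsp_iff)
      qed
    qed
  qed
  have mem: "wlam q \<gamma> \<delta> eps lam \<in> Wlam q \<gamma> \<delta> eps k lam \<longleftrightarrow> ff q \<gamma> \<delta> eps k lam = 0"
  proof -
    have "\<forall>i\<in>{1..q}. (1 - lam * \<gamma> i) * wlam q \<gamma> \<delta> eps lam i = \<delta> i"
    proof
      fix i assume i: "i \<in> {1..q}"
      have "1 - lam * \<gamma> i \<noteq> 0" using Lam_pos[OF lam i] by simp
      thus "(1 - lam * \<gamma> i) * wlam q \<gamma> \<delta> eps lam i = \<delta> i" by (simp add: wlami[OF i])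
    qed
    thus ?thesis using wlam_V wlam0 Qf_wlam[OF lam] by (auto simp: Wlam_iff)
  qed
  show ?thesis using uniq mem by auto
qed

lemma Lf_wlam: assumes lam: "lam \<in> interior (LamSet q \<gamma>)"
  shows "Lf q \<delta> eps (wlam q \<gamma> \<delta> eps lam) = lam^2 * ((lc \<gamma> \<delta> eps 0)^2 +
                 (\<Sum>i=1..q. inverse ((1 - lam * \<gamma> i)^2) * (lc \<gamma> \<delta> eps i)^2))"
proof -
  have "(\<Sum>i=1..q. (wlam q \<gamma> \<delta> eps lam i - \<delta> i)^2) =
        (\<Sum>i=1..q. lam^2 * (inverse ((1 - lam * \<gamma> i)^2) * (lc \<gamma> \<delta> eps i)^2))"
  proof (rule sum.cong)
    fix i assume i: "i \<in> {1..q}"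
    have p: "1 - lam * \<gamma> i \<noteq> 0" using Lam_pos[OF lam i] by simp
    have "i \<noteq> 0" using i by auto
    thus "(wlam q \<gamma> \<delta> eps lam i - \<delta> i)^2 = lam^2 * (inverse ((1 - lam * \<gamma> i)^2) * (lc \<gamma> \<delta> eps i)^2)"
      using p by (simp add: wlami[OF i] lc_def power_mult_distrib field_simps power2_eq_square)
  qed simp
  thus ?thesis using wlam_V by (simp add: Lf_eq wlam0 lc_def sum_distrib_left power_mult_distrib algebra_simps)
qed

end

context cf begin

lemma sum1: "(\<Sum>i=1..q. F i) = F 1 + (\<Sum>i=2..q. F i)"
  using sum.atLeast_Suc_atMost[of 1 q F] q by (simp add: numeral_2_eq_2)

lemma sumq: "(\<Sum>i=1..q. F i) = (\<Sum>i=1..q-1. F i) + F q"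
proof -
  obtain m where m: "q = Suc m" using q by (cases q) auto
  show ?thesis unfolding m by (simp add: sum.cl_ivl_Suc)
qed

lemma r1: "i \<in> {2..q} \<Longrightarrow> 1 - \<gamma> i / \<gamma> 1 > 0"
  using glt[of 1 i] g1 by (auto simp: field_simps)

lemma rq: "\<gamma> q < 0 \<Longrightarrow> i \<in> {1..q-1} \<Longrightarrow> 1 - \<gamma> i / \<gamma> q > 0"
  using glt[of i q] by (auto simp: field_simps)

lemma pt1_V: "pt1 q \<gamma> \<delta> eps s \<in> Vsp q eps"
  using q by (auto simp: Vsp_iff pt1_def)

lemma pt1_Q: "Qf q \<gamma> eps k (pt1 q \<gamma> \<delta> eps s) = \<gamma> 1 * s^2 + f1 q \<gamma> \<delta> eps k"
proof -
  have "(\<Sum>i=2..q. \<gamma> i * (pt1 q \<gamma> \<delta> eps s i)^2) = (\<Sum>i=2..q. \<gamma> i * (zhat1 \<gamma> \<delta> i)^2)"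
    by (rule sum.cong) (auto simp: pt1_def)
  moreover have "eps * pt1 q \<gamma> \<delta> eps s 0 = eps * yhat1 \<gamma> eps" by (simp add: pt1_def)
  ultimately show ?thesis unfolding Qf_eq f1_def sum1[of "\<lambda>i. \<gamma> i * (pt1 q \<gamma> \<delta> eps s i)^2"]
    by (simp add: pt1_def)
qed

lemma pt1_W1: "pt1 q \<gamma> \<delta> eps s \<in> W1 q \<gamma> \<delta> eps k \<longleftrightarrow> \<delta> 1 = 0 \<and> \<gamma> 1 * s^2 + f1 q \<gamma> \<delta> eps k = 0"
proof -
  have e0: "pt1 q \<gamma> \<delta> eps s 0 = inverse (\<gamma> 1) * eps" by (simp add: pt1_def yhat1_def)
  have oth: "(1 - inverse (\<gamma> 1) * \<gamma> i) * pt1 q \<gamma> \<delta> eps s i = \<delta> i" if i: "i \<in> {2..q}" for i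
  proof -
    have "1 - \<gamma> i / \<gamma> 1 \<noteq> 0" using r1[OF i] by linarith
    thus ?thesis using i by (simp add: pt1_def zhat1_def divide_inverse mult.commute)
  qed
  have one: "(1 - inverse (\<gamma> 1) * \<gamma> 1) * pt1 q \<gamma> \<delta> eps s 1 = 0" using g1 by simp
  have "(\<forall>i\<in>{1..q}. (1 - inverse (\<gamma> 1) * \<gamma> i) * pt1 q \<gamma> \<delta> eps s i = \<delta> i) \<longleftrightarrow> \<delta> 1 = 0"
  proof
    assume "\<forall>i\<in>{1..q}. (1 - inverse (\<gamma> 1) * \<gamma> i) * pt1 q \<gamma> \<delta> eps s i = \<delta> i"
    thus "\<delta> 1 = 0" using one q by auto
  next
    assume d: "\<delta> 1 = 0"
    show "\<forall>i\<in>{1..q}. (1 - inverse (\<gamma> 1) * \<gamma> i) * pt1 q \<gamma> \<delta> eps s i = \<delta> i"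
    proof
      fix i assume i: "i \<in> {1..q}"
      show "(1 - inverse (\<gamma> 1) * \<gamma> i) * pt1 q \<gamma> \<delta> eps s i = \<delta> i"
      proof (cases "i = 1")
        case True thus ?thesis using one d by simp
      next
        case False thus ?thesis using oth i by auto
      qed
    qed
  qed
  thus ?thesis unfolding W1_def Wlam_iff using pt1_V pt1_Q e0 by auto
qed

lemma W1_pt: assumes w: "w \<in> W1 q \<gamma> \<delta> eps k" shows "w = pt1 q \<gamma> \<delta> eps (w 1)"
proof
  fix i
  have wV: "w \<in> Vsp q eps" and w0: "w 0 = inverse (\<gamma> 1) * eps"
    and wi: "\<forall>i\<in>{1..q}. (1 - inverse (\<gamma> 1) * \<gamma> i) * w i = \<delta> i"
    using w by (auto simp: W1_def Wlam_iff)
  show "w i = pt1 q \<gamma> \<delta> eps (w 1) i"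
  proof (cases "i = 0")
    case True thus ?thesis using w0 wV by (auto simp: pt1_def yhat1_def Vsp_iff)
  next
    case n0: False
    show ?thesis
    proof (cases "i = 1")
      case True thus ?thesis by (simp add: pt1_def)
    next
      case n1: False
      show ?thesis
      proof (cases "i \<le> q")
        case True
        hence i: "i \<in> {2..q}" using n0 n1 by auto
        have p: "1 - \<gamma> i / \<gamma> 1 \<noteq> 0" using r1[OF i] by linarith
        have "(1 - \<gamma> i / \<gamma> 1) * w i = \<delta> i" using wi i by (auto simp: divide_inverse mult.commute)
        hence "w i = inverse (1 - \<gamma> i / \<gamma> 1) * \<delta> i" using p by (auto simp: field_simps)
        thus ?thesis using i by (simp add: pt1_def zhat1_def)
      next
        case False thus ?thesis using wV n0 by (auto simp: pt1_def Vsp_iff)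
      qed
    qed
  qed
qed

lemma W1_ne: "W1 q \<gamma> \<delta> eps k \<noteq> {} \<longleftrightarrow> \<delta> 1 = 0 \<and> f1 q \<gamma> \<delta> eps k \<le> 0"
proof
  assume "W1 q \<gamma> \<delta> eps k \<noteq> {}"
  then obtain w where w: "w \<in> W1 q \<gamma> \<delta> eps k" by auto
  hence "pt1 q \<gamma> \<delta> eps (w 1) \<in> W1 q \<gamma> \<delta> eps k" using W1_pt[OF w] by simp
  hence "\<delta> 1 = 0" "\<gamma> 1 * (w 1)^2 + f1 q \<gamma> \<delta> eps k = 0" by (auto simp: pt1_W1)
  moreover have "\<gamma> 1 * (w 1)^2 \<ge> 0" using g1 by simp
  ultimately show "\<delta> 1 = 0 \<and> f1 q \<gamma> \<delta> eps k \<le> 0" by linarith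
next
  assume a: "\<delta> 1 = 0 \<and> f1 q \<gamma> \<delta> eps k \<le> 0"
  let ?z = "sqrt (- f1 q \<gamma> \<delta> eps k / \<gamma> 1)"
  have "?z^2 = - f1 q \<gamma> \<delta> eps k / \<gamma> 1" using a g1 by (simp add: divide_nonpos_pos)
  hence "\<gamma> 1 * ?z^2 + f1 q \<gamma> \<delta> eps k = 0" using g1 by simp
  hence "pt1 q \<gamma> \<delta> eps ?z \<in> W1 q \<gamma> \<delta> eps k" using a by (simp add: pt1_W1)
  thus "W1 q \<gamma> \<delta> eps k \<noteq> {}" by auto
qed

lemma W1_set: assumes a: "\<delta> 1 = 0" "f1 q \<gamma> \<delta> eps k \<le> 0"
  shows "W1 q \<gamma> \<delta> eps k = {pt1 q \<gamma> \<delta> eps (sqrt (- f1 q \<gamma> \<delta> eps k / \<gamma> 1)), pt1 q \<gamma> \<delta> eps (- sqrt (- f1 q \<gamma> \<delta> eps k / \<gamma> 1))}"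
proof -
  let ?z = "sqrt (- f1 q \<gamma> \<delta> eps k / \<gamma> 1)"
  have z2: "?z^2 = - f1 q \<gamma> \<delta> eps k / \<gamma> 1" using a g1 by (simp add: divide_nonpos_pos)
  have iff: "\<gamma> 1 * s^2 + f1 q \<gamma> \<delta> eps k = 0 \<longleftrightarrow> s = ?z \<or> s = - ?z" for s
  proof -
    have "\<gamma> 1 * s^2 + f1 q \<gamma> \<delta> eps k = 0 \<longleftrightarrow> s^2 = ?z^2" using g1 z2 by (auto simp: field_simps)
    also have "\<dots> \<longleftrightarrow> s = ?z \<or> s = - ?z" by (rule power2_eq_iff)
    finally show ?thesis .
  qed
  show ?thesis
  proof
    show "W1 q \<gamma> \<delta> eps k \<subseteq> {pt1 q \<gamma> \<delta> eps ?z, pt1 q \<gamma> \<delta> eps (- ?z)}"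
    proof
      fix w assume w: "w \<in> W1 q \<gamma> \<delta> eps k"
      hence "pt1 q \<gamma> \<delta> eps (w 1) \<in> W1 q \<gamma> \<delta> eps k" using W1_pt[OF w] by simp
      hence "w 1 = ?z \<or> w 1 = - ?z" using iff by (simp add: pt1_W1)
      thus "w \<in> {pt1 q \<gamma> \<delta> eps ?z, pt1 q \<gamma> \<delta> eps (- ?z)}" using W1_pt[OF w] by auto
    qed
    show "{pt1 q \<gamma> \<delta> eps ?z, pt1 q \<gamma> \<delta> eps (- ?z)} \<subseteq> W1 q \<gamma> \<delta> eps k"
      using iff a by (simp add: pt1_W1)
  qed
qed

lemma Lf_pt1: assumes d: "\<delta> 1 = 0"
  shows "Lf q \<delta> eps (pt1 q \<gamma> \<delta> eps s) = inverse ((\<gamma> 1)^2) * ((lc \<gamma> \<delta> eps 0)^2 +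
                 (\<Sum>i=2..q. inverse ((1 - \<gamma> i / \<gamma> 1)^2) * (lc \<gamma> \<delta> eps i)^2)) + s^2"
proof -
  have S: "(\<Sum>i=2..q. (pt1 q \<gamma> \<delta> eps s i - \<delta> i)^2) =
        (\<Sum>i=2..q. inverse ((\<gamma> 1)^2) * (inverse ((1 - \<gamma> i / \<gamma> 1)^2) * (lc \<gamma> \<delta> eps i)^2))"
  proof (rule sum.cong)
    fix i assume i: "i \<in> {2..q}"
    have p: "1 - \<gamma> i / \<gamma> 1 \<noteq> 0" using r1[OF i] by linarith
    have p2: "\<gamma> 1 - \<gamma> i \<noteq> 0" using p g1 by (auto simp: field_simps)
    have "i \<noteq> 0" "i \<noteq> 1" "2 \<le> i" "i \<le> q" using i by auto
    thus "(pt1 q \<gamma> \<delta> eps s i - \<delta> i)^2 = inverse ((\<gamma> 1)^2) * (inverse ((1 - \<gamma> i / \<gamma> 1)^2) * (lc \<gamma> \<delta> eps i)^2)"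
      using p p2 g1 by (simp add: pt1_def zhat1_def lc_def power_mult_distrib field_simps power2_eq_square)
  qed simp
  have e0: "(pt1 q \<gamma> \<delta> eps s 0)^2 = inverse ((\<gamma> 1)^2) * (lc \<gamma> \<delta> eps 0)^2"
    by (simp add: pt1_def yhat1_def lc_def power_mult_distrib power_inverse)
  show ?thesis
    unfolding Lf_eq[OF pt1_V] sum1[of "\<lambda>i. (pt1 q \<gamma> \<delta> eps s i - \<delta> i)^2"] S e0
    using d by (simp add: pt1_def sum_distrib_left algebra_simps)
qed

end

context cf begin

lemma q2: "\<gamma> q < 0 \<Longrightarrow> q \<ge> 2"
  using g1 q by (cases "q = 1") auto

lemma ptq_V: "ptq q \<gamma> \<delta> eps s \<in> Vsp q eps"
  using q by (auto simp: Vsp_iff ptq_def)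

lemma ptq_Q: assumes gq: "\<gamma> q < 0"
  shows "Qf q \<gamma> eps k (ptq q \<gamma> \<delta> eps s) = \<gamma> q * s^2 + fq q \<gamma> \<delta> eps k"
proof -
  have "(\<Sum>i=1..q-1. \<gamma> i * (ptq q \<gamma> \<delta> eps s i)^2) = (\<Sum>i=1..q-1. \<gamma> i * (zhatq q \<gamma> \<delta> i)^2)"
    by (rule sum.cong) (auto simp: ptq_def)
  moreover have "eps * ptq q \<gamma> \<delta> eps s 0 = eps * yhatq q \<gamma> eps" using q2[OF gq] by (simp add: ptq_def)
  moreover have "ptq q \<gamma> \<delta> eps s q = s" using q2[OF gq] by (simp add: ptq_def)
  ultimately show ?thesis unfolding Qf_eq fq_def sumq[of "\<lambda>i. \<gamma> i * (ptq q \<gamma> \<delta> eps s i)^2"]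
    by simp
qed

lemma ptq_Wq: assumes gq: "\<gamma> q < 0"
  shows "ptq q \<gamma> \<delta> eps s \<in> Wq q \<gamma> \<delta> eps k \<longleftrightarrow> \<delta> q = 0 \<and> \<gamma> q * s^2 + fq q \<gamma> \<delta> eps k = 0"
proof -
  have Q2: "q \<ge> 2" using q2[OF gq] .
  have e0: "ptq q \<gamma> \<delta> eps s 0 = inverse (\<gamma> q) * eps" using Q2 by (simp add: ptq_def yhatq_def)
  have oth: "(1 - inverse (\<gamma> q) * \<gamma> i) * ptq q \<gamma> \<delta> eps s i = \<delta> i" if i: "i \<in> {1..q-1}" for i
  proof -
    have "1 - \<gamma> i / \<gamma> q \<noteq> 0" using rq[OF gq i] by linarith
    moreover have "i \<noteq> q" "i < q" using i Q2 by auto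
    ultimately show ?thesis using i by (simp add: ptq_def zhatq_def divide_inverse mult.commute)
  qed
  have one: "(1 - inverse (\<gamma> q) * \<gamma> q) * ptq q \<gamma> \<delta> eps s q = 0" using gq by simp
  have "(\<forall>i\<in>{1..q}. (1 - inverse (\<gamma> q) * \<gamma> i) * ptq q \<gamma> \<delta> eps s i = \<delta> i) \<longleftrightarrow> \<delta> q = 0"
  proof
    assume "\<forall>i\<in>{1..q}. (1 - inverse (\<gamma> q) * \<gamma> i) * ptq q \<gamma> \<delta> eps s i = \<delta> i"
    thus "\<delta> q = 0" using one q by auto
  next
    assume d: "\<delta> q = 0"
    show "\<forall>i\<in>{1..q}. (1 - inverse (\<gamma> q) * \<gamma> i) * ptq q \<gamma> \<delta> eps s i = \<delta> i"
    proof
      fix i assume i: "i \<in> {1..q}"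
      show "(1 - inverse (\<gamma> q) * \<gamma> i) * ptq q \<gamma> \<delta> eps s i = \<delta> i"
      proof (cases "i = q")
        case True thus ?thesis using one d by simp
      next
        case False thus ?thesis using oth i by auto
      qed
    qed
  qed
  thus ?thesis unfolding Wq_def Wlam_iff using ptq_V ptq_Q[OF gq] e0 by auto
qed

lemma Wq_pt: assumes gq: "\<gamma> q < 0" and w: "w \<in> Wq q \<gamma> \<delta> eps k" shows "w = ptq q \<gamma> \<delta> eps (w q)"
proof
  fix i
  have Q2: "q \<ge> 2" using q2[OF gq] .
  have wV: "w \<in> Vsp q eps" and w0: "w 0 = inverse (\<gamma> q) * eps"
    and wi: "\<forall>i\<in>{1..q}. (1 - inverse (\<gamma> q) * \<gamma> i) * w i = \<delta> i"
    using w by (auto simp: Wq_def Wlam_iff)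
  show "w i = ptq q \<gamma> \<delta> eps (w q) i"
  proof (cases "i = 0")
    case True thus ?thesis using w0 wV Q2 by (auto simp: ptq_def yhatq_def Vsp_iff)
  next
    case n0: False
    show ?thesis
    proof (cases "i = q")
      case True thus ?thesis using n0 by (simp add: ptq_def)
    next
      case n1: False
      show ?thesis
      proof (cases "i \<le> q")
        case True
        hence i: "i \<in> {1..q-1}" using n0 n1 by auto
        have p: "1 - \<gamma> i / \<gamma> q \<noteq> 0" using rq[OF gq i] by linarith
        have "(1 - \<gamma> i / \<gamma> q) * w i = \<delta> i" using wi i by (auto simp: divide_inverse mult.commute)
        hence "w i = inverse (1 - \<gamma> i / \<gamma> q) * \<delta> i" using p by (auto simp: field_simps)
        moreover have "i < q" using i Q2 by auto
        ultimately show ?thesis using i n0 n1 by (simp add: ptq_def zhatq_def)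
      next
        case False thus ?thesis using wV n0 by (auto simp: ptq_def Vsp_iff)
      qed
    qed
  qed
qed

lemma Wq_ne: assumes gq: "\<gamma> q < 0"
  shows "Wq q \<gamma> \<delta> eps k \<noteq> {} \<longleftrightarrow> \<delta> q = 0 \<and> fq q \<gamma> \<delta> eps k \<ge> 0"
proof
  assume "Wq q \<gamma> \<delta> eps k \<noteq> {}"
  then obtain w where w: "w \<in> Wq q \<gamma> \<delta> eps k" by auto
  hence "ptq q \<gamma> \<delta> eps (w q) \<in> Wq q \<gamma> \<delta> eps k" using Wq_pt[OF gq w] by simp
  hence "\<delta> q = 0" "\<gamma> q * (w q)^2 + fq q \<gamma> \<delta> eps k = 0" by (auto simp: ptq_Wq[OF gq])
  moreover have "\<gamma> q * (w q)^2 \<le> 0" using gq by (simp add: mult_nonpos_nonneg)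
  ultimately show "\<delta> q = 0 \<and> fq q \<gamma> \<delta> eps k \<ge> 0" by linarith
next
  assume a: "\<delta> q = 0 \<and> fq q \<gamma> \<delta> eps k \<ge> 0"
  let ?z = "sqrt (fq q \<gamma> \<delta> eps k / (- \<gamma> q))"
  have "fq q \<gamma> \<delta> eps k / (- \<gamma> q) \<ge> 0" using a gq by (intro divide_nonneg_pos) auto
  hence "?z^2 = fq q \<gamma> \<delta> eps k / (- \<gamma> q)" by simp
  hence "\<gamma> q * ?z^2 + fq q \<gamma> \<delta> eps k = 0" using gq by simp
  hence "ptq q \<gamma> \<delta> eps ?z \<in> Wq q \<gamma> \<delta> eps k" using a by (simp add: ptq_Wq[OF gq])
  thus "Wq q \<gamma> \<delta> eps k \<noteq> {}" by auto
qed

lemma Wq_set: assumes gq: "\<gamma> q < 0" and a: "\<delta> q = 0" "fq q \<gamma> \<delta> eps k \<ge> 0"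
  shows "Wq q \<gamma> \<delta> eps k = {ptq q \<gamma> \<delta> eps (sqrt (fq q \<gamma> \<delta> eps k / (- \<gamma> q))), ptq q \<gamma> \<delta> eps (- sqrt (fq q \<gamma> \<delta> eps k / (- \<gamma> q)))}"
proof -
  let ?z = "sqrt (fq q \<gamma> \<delta> eps k / (- \<gamma> q))"
  have "fq q \<gamma> \<delta> eps k / (- \<gamma> q) \<ge> 0" using a gq by (intro divide_nonneg_pos) auto
  hence z2: "?z^2 = fq q \<gamma> \<delta> eps k / (- \<gamma> q)" by simp
  have iff: "\<gamma> q * s^2 + fq q \<gamma> \<delta> eps k = 0 \<longleftrightarrow> s = ?z \<or> s = - ?z" for s
  proof -
    have "\<gamma> q * s^2 + fq q \<gamma> \<delta> eps k = 0 \<longleftrightarrow> s^2 = ?z^2" using gq z2 by (auto simp: field_simps)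
    also have "\<dots> \<longleftrightarrow> s = ?z \<or> s = - ?z" by (rule power2_eq_iff)
    finally show ?thesis .
  qed
  show ?thesis
  proof
    show "Wq q \<gamma> \<delta> eps k \<subseteq> {ptq q \<gamma> \<delta> eps ?z, ptq q \<gamma> \<delta> eps (- ?z)}"
    proof
      fix w assume w: "w \<in> Wq q \<gamma> \<delta> eps k"
      hence "ptq q \<gamma> \<delta> eps (w q) \<in> Wq q \<gamma> \<delta> eps k" using Wq_pt[OF gq w] by simp
      hence "w q = ?z \<or> w q = - ?z" using iff by (simp add: ptq_Wq[OF gq])
      thus "w \<in> {ptq q \<gamma> \<delta> eps ?z, ptq q \<gamma> \<delta> eps (- ?z)}" using Wq_pt[OF gq w] by auto
    qed
    show "{ptq q \<gamma> \<delta> eps ?z, ptq q \<gamma> \<delta> eps (- ?z)} \<subseteq> Wq q \<gamma> \<delta> eps k"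
      using iff a by (simp add: ptq_Wq[OF gq])
  qed
qed

lemma Lf_ptq: assumes gq: "\<gamma> q < 0" and d: "\<delta> q = 0"
  shows "Lf q \<delta> eps (ptq q \<gamma> \<delta> eps s) = inverse ((\<gamma> q)^2) * ((lc \<gamma> \<delta> eps 0)^2 +
                 (\<Sum>i=1..q-1. inverse ((1 - \<gamma> i / \<gamma> q)^2) * (lc \<gamma> \<delta> eps i)^2)) + s^2"
proof -
  have Q2: "q \<ge> 2" using q2[OF gq] .
  have S: "(\<Sum>i=1..q-1. (ptq q \<gamma> \<delta> eps s i - \<delta> i)^2) =
        (\<Sum>i=1..q-1. inverse ((\<gamma> q)^2) * (inverse ((1 - \<gamma> i / \<gamma> q)^2) * (lc \<gamma> \<delta> eps i)^2))"
  proof (rule sum.cong)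
    fix i assume i: "i \<in> {1..q-1}"
    have p: "1 - \<gamma> i / \<gamma> q \<noteq> 0" using rq[OF gq i] by linarith
    have p2: "\<gamma> q - \<gamma> i \<noteq> 0" using p gq by (auto simp: field_simps)
    have "i \<noteq> 0" "i \<noteq> q" "1 \<le> i" "i < q" using i Q2 by auto
    thus "(ptq q \<gamma> \<delta> eps s i - \<delta> i)^2 = inverse ((\<gamma> q)^2) * (inverse ((1 - \<gamma> i / \<gamma> q)^2) * (lc \<gamma> \<delta> eps i)^2)"
      using p p2 gq by (simp add: ptq_def zhatq_def lc_def power_mult_distrib field_simps power2_eq_square)
  qed simp
  have e0: "(ptq q \<gamma> \<delta> eps s 0)^2 = inverse ((\<gamma> q)^2) * (lc \<gamma> \<delta> eps 0)^2"
    using Q2 by (simp add: ptq_def yhatq_def lc_def power_mult_distrib power_inverse)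
  have eq: "ptq q \<gamma> \<delta> eps s q = s" using Q2 by (simp add: ptq_def)
  show ?thesis
    unfolding Lf_eq[OF ptq_V] sumq[of "\<lambda>i. (ptq q \<gamma> \<delta> eps s i - \<delta> i)^2"] S e0 eq
    using d by (simp add: sum_distrib_left algebra_simps)
qed

end

context cf begin

lemma ff_cont: assumes "\<forall>i\<in>{1..q}. \<delta> i = 0 \<or> 1 - x * \<gamma> i \<noteq> 0"
  shows "isCont (ff q \<gamma> \<delta> eps k) x"
proof -
  have t: "isCont (\<lambda>l. inverse ((1 - l * \<gamma> i)^2) * \<gamma> i * (\<delta> i)^2) x" if i: "i \<in> {1..q}" for i
  proof (cases "\<delta> i = 0")
    case True thus ?thesis by simp
  next
    case False
    hence "1 - x * \<gamma> i \<noteq> 0" using assms i by blast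
    thus ?thesis by (intro continuous_intros) auto
  qed
  have "isCont (\<lambda>l. (\<Sum>i=1..q. inverse ((1 - l * \<gamma> i)^2) * \<gamma> i * (\<delta> i)^2)) x"
    using t by (intro isCont_sum) auto
  moreover have "isCont (\<lambda>l. 2 * eps^2 * l) x" by (intro continuous_intros)
  ultimately have "isCont (\<lambda>l. (\<Sum>i=1..q. inverse ((1 - l * \<gamma> i)^2) * \<gamma> i * (\<delta> i)^2) + 2 * eps^2 * l - k) x"
    using isCont_diff[OF isCont_add continuous_const] by blast
  thus ?thesis unfolding ff_def[abs_def] .
qed

lemma ff_cont_int: "l \<in> interior (LamSet q \<gamma>) \<Longrightarrow> isCont (ff q \<gamma> \<delta> eps k) l"
  using Lam_pos by (intro ff_cont) (metis less_irrefl)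

lemma int_conv: "l1 \<in> interior (LamSet q \<gamma>) \<Longrightarrow> l2 \<in> interior (LamSet q \<gamma>) \<Longrightarrow> l1 \<le> x \<Longrightarrow> x \<le> l2
   \<Longrightarrow> x \<in> interior (LamSet q \<gamma>)"
  by (auto simp: intLam split: if_splits)

lemma ivt: assumes l1: "l1 \<in> interior (LamSet q \<gamma>)" and l2: "l2 \<in> interior (LamSet q \<gamma>)"
  and a: "ff q \<gamma> \<delta> eps k l1 < 0" "ff q \<gamma> \<delta> eps k l2 > 0"
  shows "\<exists>l\<in>interior (LamSet q \<gamma>). ff q \<gamma> \<delta> eps k l = 0"
proof (cases "l1 \<le> l2")
  case True
  have "\<forall>x. l1 \<le> x \<and> x \<le> l2 \<longrightarrow> isCont (ff q \<gamma> \<delta> eps k) x"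
    using int_conv[OF l1 l2] ff_cont_int by blast
  then obtain x where "l1 \<le> x" "x \<le> l2" "ff q \<gamma> \<delta> eps k x = 0"
    using IVT[of "ff q \<gamma> \<delta> eps k" l1 0 l2] a True by auto
  thus ?thesis using int_conv[OF l1 l2] by blast
next
  case False
  have "\<forall>x. l2 \<le> x \<and> x \<le> l1 \<longrightarrow> isCont (ff q \<gamma> \<delta> eps k) x"
    using int_conv[OF l2 l1] ff_cont_int by blast
  then obtain x where "l2 \<le> x" "x \<le> l1" "ff q \<gamma> \<delta> eps k x = 0"
    using IVT2[of "ff q \<gamma> \<delta> eps k" l1 0 l2] a False by auto
  thus ?thesis using int_conv[OF l2 l1] by blast
qed

lemma ff_at1: assumes d: "\<delta> 1 = 0" shows "ff q \<gamma> \<delta> eps k (inverse (\<gamma> 1)) = f1 q \<gamma> \<delta> eps k"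
proof -
  have "(\<Sum>i=2..q. inverse ((1 - inverse (\<gamma> 1) * \<gamma> i)^2) * \<gamma> i * (\<delta> i)^2) = (\<Sum>i=2..q. \<gamma> i * (zhat1 \<gamma> \<delta> i)^2)"
    by (rule sum.cong) (auto simp: zhat1_def power_mult_distrib power_inverse divide_inverse mult.commute)
  thus ?thesis unfolding ff_def f1_def sum1[of "\<lambda>i. inverse ((1 - inverse (\<gamma> 1) * \<gamma> i)^2) * \<gamma> i * (\<delta> i)^2"]
    using d by (simp add: yhat1_def power2_eq_square)
qed

lemma ff_atq: assumes gq: "\<gamma> q < 0" and d: "\<delta> q = 0" shows "ff q \<gamma> \<delta> eps k (inverse (\<gamma> q)) = fq q \<gamma> \<delta> eps k"
proof -
  have "(\<Sum>i=1..q-1. inverse ((1 - inverse (\<gamma> q) * \<gamma> i)^2) * \<gamma> i * (\<delta> i)^2) = (\<Sum>i=1..q-1. \<gamma> i * (zhatq q \<gamma> \<delta> i)^2)"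
    by (rule sum.cong) (auto simp: zhatq_def power_mult_distrib power_inverse divide_inverse mult.commute)
  thus ?thesis unfolding ff_def fq_def sumq[of "\<lambda>i. inverse ((1 - inverse (\<gamma> q) * \<gamma> i)^2) * \<gamma> i * (\<delta> i)^2"]
    using d by (simp add: yhatq_def power2_eq_square)
qed

lemma finf_lt: "finf q \<gamma> \<delta> eps k < 0 \<longleftrightarrow> (\<exists>l\<in>interior (LamSet q \<gamma>). ff q \<gamma> \<delta> eps k l < 0)"
  unfolding finf_def INF_less_iff by (simp add: zero_ereal_def)

lemma fsup_gt: "fsup q \<gamma> \<delta> eps k > 0 \<longleftrightarrow> (\<exists>l\<in>interior (LamSet q \<gamma>). ff q \<gamma> \<delta> eps k l > 0)"
  unfolding fsup_def less_SUP_iff by (simp add: zero_ereal_def)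

end

context cf begin

lemma intLam_mem: "l \<in> interior (LamSet q \<gamma>) \<longleftrightarrow> l < inverse (\<gamma> 1) \<and> (\<gamma> q < 0 \<longrightarrow> inverse (\<gamma> q) < l)"
  using gqnz by (auto simp: intLam)

lemma an5: assumes d: "\<delta> 1 = 0" and f: "f1 q \<gamma> \<delta> eps k > 0"
  shows "\<exists>l\<in>interior (LamSet q \<gamma>). ff q \<gamma> \<delta> eps k l > 0"
proof -
  let ?a = "inverse (\<gamma> 1)"
  have apos: "?a > 0" using g1 by simp
  have "\<forall>i\<in>{1..q}. \<delta> i = 0 \<or> 1 - ?a * \<gamma> i \<noteq> 0"
  proof
    fix i assume i: "i \<in> {1..q}"
    show "\<delta> i = 0 \<or> 1 - ?a * \<gamma> i \<noteq> 0"
    proof (cases "i = 1")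
      case True thus ?thesis using d by simp
    next
      case False
      hence "i \<in> {2..q}" using i by auto
      hence "1 - \<gamma> i / \<gamma> 1 > 0" by (rule r1)
      thus ?thesis by (simp add: divide_inverse mult.commute)
    qed
  qed
  hence c: "isCont (ff q \<gamma> \<delta> eps k) ?a" by (rule ff_cont)
  have "(ff q \<gamma> \<delta> eps k \<longlongrightarrow> ff q \<gamma> \<delta> eps k ?a) (at ?a)" using c by (simp add: continuous_at)
  moreover have "ff q \<gamma> \<delta> eps k ?a > 0" using ff_at1[OF d] f by simp
  ultimately have "eventually (\<lambda>x. 0 < ff q \<gamma> \<delta> eps k x) (at ?a)" by (rule order_tendstoD(1))
  then obtain e where e: "e > 0" and ev: "\<forall>x. x \<noteq> ?a \<and> dist x ?a < e \<longrightarrow> 0 < ff q \<gamma> \<delta> eps k x"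
    unfolding eventually_at by auto
  let ?x = "?a - min e ?a / 2"
  have x1: "?x \<noteq> ?a" "dist ?x ?a < e" using e apos by (auto simp: dist_real_def min_def)
  have x2: "?x > 0" "?x < ?a" using e apos by (auto simp: min_def)
  have "\<gamma> q < 0 \<longrightarrow> inverse (\<gamma> q) < ?x"
  proof
    assume "\<gamma> q < 0" hence "inverse (\<gamma> q) < 0" by simp
    thus "inverse (\<gamma> q) < ?x" using x2 by linarith
  qed
  hence xi: "?x \<in> interior (LamSet q \<gamma>)" unfolding intLam_mem using x2 by blast
  show ?thesis using xi ev x1 by blast
qed

lemma an6: assumes gq: "\<gamma> q < 0" and d: "\<delta> q = 0" and f: "fq q \<gamma> \<delta> eps k < 0"
  shows "\<exists>l\<in>interior (LamSet q \<gamma>). ff q \<gamma> \<delta> eps k l < 0"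
proof -
  let ?a = "inverse (\<gamma> q)"
  have aneg: "?a < 0" using gq by simp
  have "\<forall>i\<in>{1..q}. \<delta> i = 0 \<or> 1 - ?a * \<gamma> i \<noteq> 0"
  proof
    fix i assume i: "i \<in> {1..q}"
    show "\<delta> i = 0 \<or> 1 - ?a * \<gamma> i \<noteq> 0"
    proof (cases "i = q")
      case True thus ?thesis using d by simp
    next
      case False
      hence "i \<in> {1..q-1}" using i by auto
      hence "1 - \<gamma> i / \<gamma> q > 0" by (rule rq[OF gq])
      thus ?thesis by (simp add: divide_inverse mult.commute)
    qed
  qed
  hence c: "isCont (ff q \<gamma> \<delta> eps k) ?a" by (rule ff_cont)
  have "(ff q \<gamma> \<delta> eps k \<longlongrightarrow> ff q \<gamma> \<delta> eps k ?a) (at ?a)" using c by (simp add: continuous_at)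
  moreover have "ff q \<gamma> \<delta> eps k ?a < 0" using ff_atq[OF gq d] f by simp
  ultimately have "eventually (\<lambda>x. ff q \<gamma> \<delta> eps k x < 0) (at ?a)" by (rule order_tendstoD(2))
  then obtain e where e: "e > 0" and ev: "\<forall>x. x \<noteq> ?a \<and> dist x ?a < e \<longrightarrow> ff q \<gamma> \<delta> eps k x < 0"
    unfolding eventually_at by auto
  let ?x = "?a + min e (- ?a) / 2"
  have x1: "?x \<noteq> ?a" "dist ?x ?a < e" using e aneg by (auto simp: dist_real_def min_def)
  have x2: "?x < 0" "?x > ?a" using e aneg by (auto simp: min_def)
  have "inverse (\<gamma> 1) > 0" using g1 by simp
  hence xi: "?x \<in> interior (LamSet q \<gamma>)" unfolding intLam_mem using x2 gq by linarith
  show ?thesis using xi ev x1 by blast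
qed

end

context cf begin

lemma T_def_split: "ff q \<gamma> \<delta> eps k l = (\<Sum>i=1..q. inverse ((1 - l * \<gamma> i)^2) * (\<gamma> i * (\<delta> i)^2)) + 2 * eps^2 * l - k"
  unfolding ff_def by (simp add: mult.assoc)

lemma inv_sq_le1: "(s::real) \<ge> 1 \<Longrightarrow> inverse (s^2) \<le> 1"
proof -
  assume s: "s \<ge> 1"
  hence "1 \<le> s^2" by (simp add: one_le_power)
  thus ?thesis by (simp add: inverse_le_1_iff)
qed

lemma lowb: assumes l0: "0 \<le> l"
  shows "ff q \<gamma> \<delta> eps k l \<ge> inverse ((1 - l * \<gamma> 1)^2) * (\<gamma> 1 * (\<delta> 1)^2) - (\<Sum>i=2..q. \<bar>\<gamma> i\<bar> * (\<delta> i)^2) - k"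
proof -
  have per: "inverse ((1 - l * \<gamma> i)^2) * (\<gamma> i * (\<delta> i)^2) \<ge> - (\<bar>\<gamma> i\<bar> * (\<delta> i)^2)" if i: "i \<in> {2..q}" for i
  proof (cases "\<gamma> i > 0")
    case True
    hence "inverse ((1 - l * \<gamma> i)^2) * (\<gamma> i * (\<delta> i)^2) \<ge> 0" by simp
    moreover have "- (\<bar>\<gamma> i\<bar> * (\<delta> i)^2) \<le> 0" by simp
    ultimately show ?thesis by linarith
  next
    case False
    hence gn: "\<gamma> i \<le> 0" by simp
    have "l * \<gamma> i \<le> 0" using l0 gn by (simp add: mult_nonneg_nonpos)
    hence "inverse ((1 - l * \<gamma> i)^2) \<le> 1" by (intro inv_sq_le1) simp
    moreover have "\<gamma> i * (\<delta> i)^2 \<le> 0" using gn by (simp add: mult_nonpos_nonneg)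
    ultimately have "1 * (\<gamma> i * (\<delta> i)^2) \<le> inverse ((1 - l * \<gamma> i)^2) * (\<gamma> i * (\<delta> i)^2)"
      by (rule mult_right_mono_neg)
    thus ?thesis using gn by simp
  qed
  have "(\<Sum>i=2..q. inverse ((1 - l * \<gamma> i)^2) * (\<gamma> i * (\<delta> i)^2)) \<ge> (\<Sum>i=2..q. - (\<bar>\<gamma> i\<bar> * (\<delta> i)^2))"
    using per by (intro sum_mono) auto
  moreover have "2 * eps^2 * l \<ge> 0" using l0 by simp
  moreover have "(\<Sum>i=2..q. - (\<bar>\<gamma> i\<bar> * (\<delta> i)^2)) = - (\<Sum>i=2..q. \<bar>\<gamma> i\<bar> * (\<delta> i)^2)" by (simp add: sum_negf)
  ultimately show ?thesis unfolding T_def_split sum1[of "\<lambda>i. inverse ((1 - l * \<gamma> i)^2) * (\<gamma> i * (\<delta> i)^2)"]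
    by linarith
qed

lemma an3: assumes d: "\<delta> 1 \<noteq> 0"
  shows "\<exists>l\<in>interior (LamSet q \<gamma>). ff q \<gamma> \<delta> eps k l > 0"
proof -
  define c where "c = \<gamma> 1 * (\<delta> 1)^2"
  define M where "M = (\<Sum>i=2..q. \<bar>\<gamma> i\<bar> * (\<delta> i)^2)"
  define t where "t = c / (2 * (M + \<bar>k\<bar> + c))"
  define l where "l = (1 - t) * inverse (\<gamma> 1)"
  have c: "c > 0" using d g1 by (simp add: c_def)
  have M: "M \<ge> 0" unfolding M_def by (intro sum_nonneg) simp
  have t0: "t > 0" using c M by (simp add: t_def)
  have t1: "t \<le> 1/2" using c M by (simp add: t_def field_simps)
  have "inverse (\<gamma> 1) * \<gamma> 1 = 1" using g1 by simp
  hence lt: "1 - l * \<gamma> 1 = t" by (simp add: l_def mult.assoc)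
  have l0: "l \<ge> 0" using t1 g1 by (simp add: l_def)
  have l1: "l < inverse (\<gamma> 1)" using t0 g1 by (simp add: l_def algebra_simps)
  have "t^2 \<le> t" using t0 t1 by (simp add: power2_eq_square mult_le_cancel_right1)
  hence "inverse t \<le> inverse (t^2)" using t0 by (intro le_imp_inverse_le) auto
  hence "c * inverse t \<le> c * inverse (t^2)" using c by simp
  moreover have "c * inverse t = 2 * (M + \<bar>k\<bar> + c)" using c M t0 by (simp add: t_def field_simps)
  ultimately have big: "c * inverse (t^2) \<ge> 2 * (M + \<bar>k\<bar> + c)" by simp
  have "ff q \<gamma> \<delta> eps k l \<ge> inverse (t^2) * c - M - k"
    using lowb[OF l0] unfolding lt c_def M_def .
  hence pos: "ff q \<gamma> \<delta> eps k l > 0" using big c M by (simp add: mult.commute)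
  have "\<gamma> q < 0 \<longrightarrow> inverse (\<gamma> q) < l"
  proof
    assume "\<gamma> q < 0" hence "inverse (\<gamma> q) < 0" by simp
    thus "inverse (\<gamma> q) < l" using l0 by linarith
  qed
  hence "l \<in> interior (LamSet q \<gamma>)" unfolding intLam_mem using l1 by blast
  thus ?thesis using pos by blast
qed

lemma upb: assumes gq: "\<gamma> q < 0" and l0: "l \<le> 0"
  shows "ff q \<gamma> \<delta> eps k l \<le> inverse ((1 - l * \<gamma> q)^2) * (\<gamma> q * (\<delta> q)^2) + (\<Sum>i=1..q-1. \<bar>\<gamma> i\<bar> * (\<delta> i)^2) - k"
proof -
  have per: "inverse ((1 - l * \<gamma> i)^2) * (\<gamma> i * (\<delta> i)^2) \<le> \<bar>\<gamma> i\<bar> * (\<delta> i)^2" if i: "i \<in> {1..q-1}" for i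
  proof (cases "\<gamma> i > 0")
    case False
    hence "\<gamma> i * (\<delta> i)^2 \<le> 0" by (simp add: mult_nonpos_nonneg)
    hence "inverse ((1 - l * \<gamma> i)^2) * (\<gamma> i * (\<delta> i)^2) \<le> 0" by (simp add: mult_nonneg_nonpos)
    moreover have "\<bar>\<gamma> i\<bar> * (\<delta> i)^2 \<ge> 0" by simp
    ultimately show ?thesis by linarith
  next
    case True
    have "l * \<gamma> i \<le> 0" using l0 True by (simp add: mult_nonpos_nonneg)
    hence "inverse ((1 - l * \<gamma> i)^2) \<le> 1" by (intro inv_sq_le1) simp
    moreover have "\<gamma> i * (\<delta> i)^2 \<ge> 0" using True by simp
    ultimately have "inverse ((1 - l * \<gamma> i)^2) * (\<gamma> i * (\<delta> i)^2) \<le> 1 * (\<gamma> i * (\<delta> i)^2)"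
      by (rule mult_right_mono)
    thus ?thesis using True by simp
  qed
  have "(\<Sum>i=1..q-1. inverse ((1 - l * \<gamma> i)^2) * (\<gamma> i * (\<delta> i)^2)) \<le> (\<Sum>i=1..q-1. \<bar>\<gamma> i\<bar> * (\<delta> i)^2)"
    using per by (intro sum_mono) auto
  moreover have "2 * eps^2 * l \<le> 0" using l0 by (simp add: mult_nonneg_nonpos)
  ultimately show ?thesis unfolding T_def_split sumq[of "\<lambda>i. inverse ((1 - l * \<gamma> i)^2) * (\<gamma> i * (\<delta> i)^2)"]
    by linarith
qed

lemma an4: assumes gq: "\<gamma> q < 0" and d: "\<delta> q \<noteq> 0"
  shows "\<exists>l\<in>interior (LamSet q \<gamma>). ff q \<gamma> \<delta> eps k l < 0"
proof -
  define c where "c = - \<gamma> q * (\<delta> q)^2"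
  define M where "M = (\<Sum>i=1..q-1. \<bar>\<gamma> i\<bar> * (\<delta> i)^2)"
  define t where "t = c / (2 * (M + \<bar>k\<bar> + c))"
  define l where "l = (1 - t) * inverse (\<gamma> q)"
  have "(\<delta> q)^2 > 0" using d by simp
  hence c: "c > 0" using gq unfolding c_def by (intro mult_pos_pos) auto
  have M: "M \<ge> 0" unfolding M_def by (intro sum_nonneg) simp
  have t0: "t > 0" using c M by (simp add: t_def)
  have t1: "t \<le> 1/2" using c M by (simp add: t_def field_simps)
  have "inverse (\<gamma> q) * \<gamma> q = 1" using gq by simp
  hence lt: "1 - l * \<gamma> q = t" by (simp add: l_def mult.assoc)
  have l0: "l \<le> 0" using t1 gq by (simp add: l_def mult_nonneg_nonpos)
  have lq: "inverse (\<gamma> q) < l"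
  proof -
    have "l - inverse (\<gamma> q) = t * (- inverse (\<gamma> q))" by (simp add: l_def algebra_simps)
    moreover have "- inverse (\<gamma> q) > 0" using gq by simp
    ultimately show ?thesis using t0 by (metis diff_gt_0_iff_gt mult_pos_pos)
  qed
  have "t^2 \<le> t" using t0 t1 by (simp add: power2_eq_square mult_le_cancel_right1)
  hence "inverse t \<le> inverse (t^2)" using t0 by (intro le_imp_inverse_le) auto
  hence "c * inverse t \<le> c * inverse (t^2)" using c by simp
  moreover have "c * inverse t = 2 * (M + \<bar>k\<bar> + c)" using c M t0 by (simp add: t_def field_simps)
  ultimately have big: "c * inverse (t^2) \<ge> 2 * (M + \<bar>k\<bar> + c)" by simp
  have "ff q \<gamma> \<delta> eps k l \<le> inverse (t^2) * (- c) + M - k"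
    using upb[OF gq l0] unfolding lt c_def M_def by simp
  hence neg: "ff q \<gamma> \<delta> eps k l < 0" using big c M by (simp add: mult.commute)
  have "inverse (\<gamma> 1) > 0" using g1 by simp
  hence "l \<in> interior (LamSet q \<gamma>)" unfolding intLam_mem using l0 lq by linarith
  thus ?thesis using neg by blast
qed

end

context cf begin

lemma upb2: assumes gq: "\<gamma> q > 0" and l0: "l \<le> 0"
  shows "ff q \<gamma> \<delta> eps k l \<le> inverse ((1 - l * \<gamma> q)^2) * (\<Sum>i=1..q. \<gamma> i * (\<delta> i)^2) + 2 * eps^2 * l - k"
proof -
  have per: "inverse ((1 - l * \<gamma> i)^2) * (\<gamma> i * (\<delta> i)^2) \<le> inverse ((1 - l * \<gamma> q)^2) * (\<gamma> i * (\<delta> i)^2)"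
    if i: "i \<in> {1..q}" for i
  proof -
    have gi: "\<gamma> q \<le> \<gamma> i" using gle[of i q] i by auto
    have "l * \<gamma> i \<le> l * \<gamma> q" using l0 gi by (simp add: mult_left_mono_neg)
    moreover have "l * \<gamma> q \<le> 0" using l0 gq by (simp add: mult_nonpos_nonneg)
    ultimately have a: "1 \<le> 1 - l * \<gamma> q" "1 - l * \<gamma> q \<le> 1 - l * \<gamma> i" by auto
    hence "(1 - l * \<gamma> q)^2 \<le> (1 - l * \<gamma> i)^2" by (intro power_mono) auto
    moreover have "0 < (1 - l * \<gamma> q)^2" using a by simp
    ultimately have "inverse ((1 - l * \<gamma> i)^2) \<le> inverse ((1 - l * \<gamma> q)^2)" by (rule le_imp_inverse_le)
    moreover have "\<gamma> i * (\<delta> i)^2 \<ge> 0" using gi gq by simp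
    ultimately show ?thesis by (rule mult_right_mono)
  qed
  have "(\<Sum>i=1..q. inverse ((1 - l * \<gamma> i)^2) * (\<gamma> i * (\<delta> i)^2)) \<le> (\<Sum>i=1..q. inverse ((1 - l * \<gamma> q)^2) * (\<gamma> i * (\<delta> i)^2))"
    using per by (intro sum_mono) auto
  thus ?thesis unfolding T_def_split sum_distrib_left[symmetric] by linarith
qed

lemma an2: assumes gq: "\<gamma> q > 0" and ek: "eps > 0 \<or> k > 0"
  shows "\<exists>l\<in>interior (LamSet q \<gamma>). ff q \<gamma> \<delta> eps k l < 0"
proof -
  define P where "P = (\<Sum>i=1..q. \<gamma> i * (\<delta> i)^2)"
  have P: "P \<ge> 0" unfolding P_def
  proof (intro sum_nonneg)
    fix i assume i: "i \<in> {1..q}"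
    have "\<gamma> q \<le> \<gamma> i" using gle[of i q] i by auto
    thus "\<gamma> i * (\<delta> i)^2 \<ge> 0" using gq by simp
  qed
  have ai: "inverse (\<gamma> 1) > 0" using g1 by simp
  have mem: "l \<le> 0 \<Longrightarrow> l \<in> interior (LamSet q \<gamma>)" for l
  proof -
    assume "l \<le> 0" hence "l < inverse (\<gamma> 1)" using ai by linarith
    thus ?thesis unfolding intLam_mem using gq by auto
  qed
  show ?thesis
  proof (cases "eps > 0")
    case True
    define l where "l = min 0 ((k - P) / (2 * eps^2) - 1)"
    have l0: "l \<le> 0" by (simp add: l_def)
    have e2: "2 * eps^2 > 0" using True by simp
    have "2 * eps^2 * l \<le> 2 * eps^2 * ((k - P) / (2 * eps^2) - 1)"
      using e2 by (intro mult_left_mono) (auto simp: l_def)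
    also have "\<dots> = k - P - 2 * eps^2" using e2 by (simp add: field_simps)
    finally have b1: "2 * eps^2 * l \<le> k - P - 2 * eps^2" .
    have "1 \<le> 1 - l * \<gamma> q" using l0 gq by (simp add: mult_nonpos_nonneg)
    hence "inverse ((1 - l * \<gamma> q)^2) \<le> 1" by (rule inv_sq_le1)
    hence "inverse ((1 - l * \<gamma> q)^2) * P \<le> 1 * P" using P by (rule mult_right_mono)
    hence "ff q \<gamma> \<delta> eps k l < 0" using upb2[OF gq l0] b1 e2 unfolding P_def by linarith
    thus ?thesis using mem[OF l0] by blast
  next
    case False
    hence k: "k > 0" using ek by simp
    define l where "l = - (P / k) * inverse (\<gamma> q)"
    have l0: "l \<le> 0" using P k gq by (simp add: l_def divide_nonneg_pos)
    have "inverse (\<gamma> q) * \<gamma> q = 1" using gq by simp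
    hence u: "1 - l * \<gamma> q = 1 + P / k" by (simp add: l_def mult.assoc)
    define u where "u = 1 + P / k"
    have u1: "u \<ge> 1" using P k by (simp add: u_def)
    have "u \<le> u^2" using u1 by (simp add: power2_eq_square)
    hence "inverse (u^2) \<le> inverse u" using u1 by (intro le_imp_inverse_le) auto
    hence "inverse (u^2) * P \<le> inverse u * P" using P by (rule mult_right_mono)
    also have "inverse u * P < k"
    proof -
      have "inverse u * P = P * k / (k + P)" using k P by (simp add: u_def field_simps)
      also have "\<dots> < k" using k P by (simp add: field_simps)
      finally show ?thesis .
    qed
    finally have "inverse (u^2) * P < k" .
    moreover have "2 * eps^2 * l = 0" using False epos by simp
    moreover have u': "1 - l * \<gamma> q = u" using u by (simp add: u_def)
    moreover have "ff q \<gamma> \<delta> eps k l \<le> inverse (u^2) * P + 2 * eps^2 * l - k"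
      using upb2[OF gq l0] unfolding u' P_def .
    ultimately have "ff q \<gamma> \<delta> eps k l < 0" by linarith
    thus ?thesis using mem[OF l0] by blast
  qed
qed

lemma kpos: assumes gq: "\<gamma> q > 0" and e: "eps = 0" and W: "Wset q \<gamma> eps k \<noteq> {}"
  and s: "singLagrangian q \<gamma> \<delta> eps k"
  shows "k > 0"
proof -
  obtain w where w: "w \<in> Wset q \<gamma> eps k" using W by auto
  hence "Qf q \<gamma> eps k w = 0" by (simp add: Wset_def)
  hence kk: "k = (\<Sum>i=1..q. \<gamma> i * (w i)^2)" using e Qf_eq[of w] by simp
  have "(\<Sum>i=1..q. \<gamma> i * (w i)^2) \<ge> 0"
  proof (intro sum_nonneg)
    fix i assume i: "i \<in> {1..q}"
    have "\<gamma> q \<le> \<gamma> i" using gle[of i q] i by auto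
    thus "\<gamma> i * (w i)^2 \<ge> 0" using gq by simp
  qed
  moreover have "k \<noteq> 0"
  proof
    assume "k = 0"
    thus False using s e gq by (auto simp: singLagrangian_def nonLagrangian_def multLagrangian_def)
  qed
  ultimately show ?thesis using kk by linarith
qed

end

context cf begin

lemma hc: assumes "\<exists>l\<in>interior (LamSet q \<gamma>). ff q \<gamma> \<delta> eps k l < 0"
  "\<exists>l\<in>interior (LamSet q \<gamma>). ff q \<gamma> \<delta> eps k l > 0"
  shows "What q \<gamma> \<delta> eps k = Wcirc q \<gamma> \<delta> eps k \<and> Wcirc q \<gamma> \<delta> eps k \<noteq> {}"
proof -
  obtain l1 l2 where l1: "l1 \<in> interior (LamSet q \<gamma>)" "ff q \<gamma> \<delta> eps k l1 < 0"
    and l2: "l2 \<in> interior (LamSet q \<gamma>)" "ff q \<gamma> \<delta> eps k l2 > 0" using assms by blast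
  obtain l where l: "l \<in> interior (LamSet q \<gamma>)" "ff q \<gamma> \<delta> eps k l = 0"
    using ivt[OF l1(1) l2(1) l1(2) l2(2)] by blast
  have "wlam q \<gamma> \<delta> eps l \<in> Wlam q \<gamma> \<delta> eps k l" using Wlam_int[OF l(1)] l(2) by simp
  hence ne: "Wcirc q \<gamma> \<delta> eps k \<noteq> {}" using l(1) by (auto simp: Wcirc_def)
  thus ?thesis using Wcirc_eq[OF ne] by simp
qed

lemma h1: assumes "\<forall>l\<in>interior (LamSet q \<gamma>). ff q \<gamma> \<delta> eps k l \<le> 0"
  shows "What q \<gamma> \<delta> eps k = W1 q \<gamma> \<delta> eps k \<and> W1 q \<gamma> \<delta> eps k \<noteq> {}"
proof -
  have d: "\<delta> 1 = 0" using an3 assms by force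
  have f: "f1 q \<gamma> \<delta> eps k \<le> 0" using an5[OF d] assms by force
  have ne: "W1 q \<gamma> \<delta> eps k \<noteq> {}" using W1_ne d f by simp
  then obtain w where w: "w \<in> W1 q \<gamma> \<delta> eps k" by auto
  show ?thesis using G(1)[OF inv1_Lam w[unfolded W1_def]] ne by (simp add: W1_def)
qed

lemma hq: assumes gq: "\<gamma> q < 0" and "\<forall>l\<in>interior (LamSet q \<gamma>). ff q \<gamma> \<delta> eps k l \<ge> 0"
  shows "What q \<gamma> \<delta> eps k = Wq q \<gamma> \<delta> eps k \<and> Wq q \<gamma> \<delta> eps k \<noteq> {}"
proof -
  have d: "\<delta> q = 0" using an4[OF gq] assms by force
  have f: "fq q \<gamma> \<delta> eps k \<ge> 0" using an6[OF gq d] assms by force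
  have ne: "Wq q \<gamma> \<delta> eps k \<noteq> {}" using Wq_ne[OF gq] d f by simp
  then obtain w where w: "w \<in> Wq q \<gamma> \<delta> eps k" by auto
  show ?thesis using G(1)[OF invq_Lam[OF gq] w[unfolded Wq_def]] ne by (simp add: Wq_def)
qed

lemma W1_What: "W1 q \<gamma> \<delta> eps k \<noteq> {} \<Longrightarrow> W1 q \<gamma> \<delta> eps k = What q \<gamma> \<delta> eps k"
proof -
  assume "W1 q \<gamma> \<delta> eps k \<noteq> {}"
  then obtain w where w: "w \<in> W1 q \<gamma> \<delta> eps k" by auto
  show ?thesis using G(1)[OF inv1_Lam w[unfolded W1_def]] by (simp add: W1_def)
qed

lemma Wq_What: "\<gamma> q < 0 \<Longrightarrow> Wq q \<gamma> \<delta> eps k \<noteq> {} \<Longrightarrow> Wq q \<gamma> \<delta> eps k = What q \<gamma> \<delta> eps k"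
proof -
  assume gq: "\<gamma> q < 0" and "Wq q \<gamma> \<delta> eps k \<noteq> {}"
  then obtain w where w: "w \<in> Wq q \<gamma> \<delta> eps k" by auto
  show ?thesis using G(1)[OF invq_Lam[OF gq] w[unfolded Wq_def]] by (simp add: Wq_def)
qed

lemma outcome: assumes s: "singLagrangian q \<gamma> \<delta> eps k" and W: "Wset q \<gamma> eps k \<noteq> {}"
  shows "(What q \<gamma> \<delta> eps k = Wcirc q \<gamma> \<delta> eps k \<and> Wcirc q \<gamma> \<delta> eps k \<noteq> {}) \<or>
         (What q \<gamma> \<delta> eps k = W1 q \<gamma> \<delta> eps k \<and> W1 q \<gamma> \<delta> eps k \<noteq> {}) \<or>
         (\<gamma> q < 0 \<and> What q \<gamma> \<delta> eps k = Wq q \<gamma> \<delta> eps k \<and> Wq q \<gamma> \<delta> eps k \<noteq> {})"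
proof (cases "\<gamma> q > 0")
  case True
  have ek: "eps > 0 \<or> k > 0" using kpos[OF True _ W s] epos by force
  have neg: "\<exists>l\<in>interior (LamSet q \<gamma>). ff q \<gamma> \<delta> eps k l < 0" using an2[OF True ek] .
  show ?thesis
  proof (cases "\<exists>l\<in>interior (LamSet q \<gamma>). ff q \<gamma> \<delta> eps k l > 0")
    case True thus ?thesis using hc[OF neg] by blast
  next
    case False
    hence "\<forall>l\<in>interior (LamSet q \<gamma>). ff q \<gamma> \<delta> eps k l \<le> 0" by (auto simp: not_less)
    thus ?thesis using h1 by blast
  qed
next
  case False
  hence gq: "\<gamma> q < 0" using gqnz by simp
  show ?thesis
  proof (cases "\<exists>l\<in>interior (LamSet q \<gamma>). ff q \<gamma> \<delta> eps k l > 0")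
    case pos: True
    show ?thesis
    proof (cases "\<exists>l\<in>interior (LamSet q \<gamma>). ff q \<gamma> \<delta> eps k l < 0")
      case True thus ?thesis using hc[OF True pos] by blast
    next
      case False
      hence "\<forall>l\<in>interior (LamSet q \<gamma>). ff q \<gamma> \<delta> eps k l \<ge> 0" by (auto simp: not_less)
      thus ?thesis using hq[OF gq] gq by blast
    qed
  next
    case False
    hence "\<forall>l\<in>interior (LamSet q \<gamma>). ff q \<gamma> \<delta> eps k l \<le> 0" by (auto simp: not_less)
    thus ?thesis using h1 by blast
  qed
qed

end

context cf begin

lemma zero_V: "(\<lambda>_. 0::real) \<in> Vsp q eps" by (simp add: Vsp_iff)

lemma partA: assumes nl: "nonLagrangian q \<gamma> \<delta> eps k"
  shows "Wcirc q \<gamma> \<delta> eps k = {} \<and> W1 q \<gamma> \<delta> eps k = {} \<and>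
       Wset q \<gamma> eps k = {(\<lambda>_. 0)} \<and>
       Linf q \<gamma> \<delta> eps k = (\<Sum>i=1..q. inverse ((\<gamma> i)^2) * (lc \<gamma> \<delta> eps i)^2) \<and>
       Linf q \<gamma> \<delta> eps k > 0 \<and>
       What q \<gamma> \<delta> eps k = {(\<lambda>_. 0)}"
proof -
  have e: "eps = 0" and k: "k = 0" and gq: "\<gamma> q > 0" and dn: "\<exists>i\<in>{1..q}. \<delta> i \<noteq> 0"
    using nl by (auto simp: nonLagrangian_def)
  let ?z = "(\<lambda>_. 0::real)"
  have gp: "\<gamma> i > 0" if "i \<in> {1..q}" for i using gle[of i q] that gq by auto
  have Ws: "Wset q \<gamma> eps k = {?z}"
  proof
    show "Wset q \<gamma> eps k \<subseteq> {?z}"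
    proof
      fix w assume w: "w \<in> Wset q \<gamma> eps k"
      hence wV: "w \<in> Vsp q eps" and "Qf q \<gamma> eps k w = 0" by (auto simp: Wset_def)
      hence s: "(\<Sum>i=1..q. \<gamma> i * (w i)^2) = 0" using e k Qf_eq[of w] by simp
      have "\<forall>i\<in>{1..q}. \<gamma> i * (w i)^2 = 0"
        using sum_nonneg_eq_0_iff[of "{1..q}" "\<lambda>i. \<gamma> i * (w i)^2"] s gp
        by (simp add: less_imp_le)
      hence wi: "\<forall>i\<in>{1..q}. w i = 0" using gp by (metis less_irrefl mult_eq_0_iff power_eq_0_iff)
      have "w = ?z"
      proof
        fix i
        have wV': "(\<forall>i. q < i \<longrightarrow> w i = 0) \<and> (eps = 0 \<longrightarrow> w 0 = 0)" using wV by (simp only: Vsp_iff)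
        show "w i = 0" using wi wV' e by (cases "i = 0"; cases "i \<le> q") auto
      qed
      thus "w \<in> {?z}" by simp
    qed
    show "{?z} \<subseteq> Wset q \<gamma> eps k" unfolding Wset_def Qf_eq using k e zero_V by simp
  qed
  have Wl: "Wlam q \<gamma> \<delta> eps k l = {}" for l
  proof (rule ccontr)
    assume "Wlam q \<gamma> \<delta> eps k l \<noteq> {}"
    then obtain w where w: "w \<in> Wlam q \<gamma> \<delta> eps k l" by auto
    hence "w \<in> Wset q \<gamma> eps k" by (simp add: Wlam_iff Wset_def)
    hence "w = ?z" using Ws by simp
    hence "\<forall>i\<in>{1..q}. \<delta> i = 0" using w by (simp add: Wlam_iff)
    thus False using dn by blast
  qed
  have Lz: "Lf q \<delta> eps ?z = (\<Sum>i=1..q. (\<delta> i)^2)" using Lf_eq[OF zero_V] by simp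
  have Li: "Linf q \<gamma> \<delta> eps k = Lf q \<delta> eps ?z" unfolding Linf_def Ws by simp
  have form: "(\<Sum>i=1..q. (\<delta> i)^2) = (\<Sum>i=1..q. inverse ((\<gamma> i)^2) * (lc \<gamma> \<delta> eps i)^2)"
  proof (rule sum.cong)
    fix i assume i: "i \<in> {1..q}"
    hence "\<gamma> i \<noteq> 0" "i \<noteq> 0" using gnz by auto
    thus "(\<delta> i)^2 = inverse ((\<gamma> i)^2) * (lc \<gamma> \<delta> eps i)^2"
      by (simp add: lc_def power_mult_distrib power2_abs field_simps)
  qed simp
  obtain j where j: "j \<in> {1..q}" "\<delta> j \<noteq> 0" using dn by blast
  have "(\<delta> j)^2 \<le> (\<Sum>i=1..q. (\<delta> i)^2)" using j by (intro member_le_sum) auto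
  moreover have "(\<delta> j)^2 > 0" using j by simp
  ultimately have pos: "(\<Sum>i=1..q. (\<delta> i)^2) > 0" by linarith
  have Wh: "What q \<gamma> \<delta> eps k = {?z}" using Ws Li by (auto simp: What_def)
  show ?thesis using Wl Ws Li Lz form pos Wh by (simp add: Wcirc_def W1_def)
qed

lemma partB: assumes ml: "multLagrangian q \<gamma> \<delta> eps k"
  shows "Linf q \<gamma> \<delta> eps k = 0 \<and>
       What q \<gamma> \<delta> eps k = {(\<lambda>_. 0)} \<and> Wcirc q \<gamma> \<delta> eps k = {(\<lambda>_. 0)} \<and>
       W1 q \<gamma> \<delta> eps k = {(\<lambda>_. 0)} \<and>
       (\<gamma> q < 0 \<longrightarrow> Wq q \<gamma> \<delta> eps k = {(\<lambda>_. 0)})"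
proof -
  have e: "eps = 0" and k: "k = 0" and d: "\<forall>i\<in>{1..q}. \<delta> i = 0"
    using ml by (auto simp: multLagrangian_def)
  let ?z = "(\<lambda>_. 0::real)"
  have zl: "?z \<in> Wlam q \<gamma> \<delta> eps k l" for l
    unfolding Wlam_iff Qf_eq using zero_V e k d by simp
  have Wh: "What q \<gamma> \<delta> eps k = W1 q \<gamma> \<delta> eps k" and Li: "Linf q \<gamma> \<delta> eps k = Lf q \<delta> eps ?z"
    using G[OF inv1_Lam zl] by (auto simp: W1_def)
  have Lz: "Lf q \<delta> eps ?z = 0" using Lf_eq[OF zero_V] d by simp
  have Wz: "What q \<gamma> \<delta> eps k = {?z}"
  proof
    show "What q \<gamma> \<delta> eps k \<subseteq> {?z}"
    proof
      fix w assume "w \<in> What q \<gamma> \<delta> eps k"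
      hence wV: "w \<in> Vsp q eps" and L: "Lf q \<delta> eps w = 0" using Li Lz by (auto simp: What_def Wset_def)
      have L2: "(w 0)^2 + (\<Sum>i=1..q. (w i)^2) = 0"
      proof -
        have "(\<Sum>i=1..q. (w i - \<delta> i)^2) = (\<Sum>i=1..q. (w i)^2)" using d by (intro sum.cong) auto
        thus ?thesis using L Lf_eq[OF wV] by simp
      qed
      have s0: "(\<Sum>i=1..q. (w i)^2) \<ge> 0" by (intro sum_nonneg) auto
      have "(w 0)^2 = 0" using L2 s0 zero_le_power2[of "w 0"] by linarith
      hence w0: "w 0 = 0" by simp
      have "(\<Sum>i=1..q. (w i)^2) = 0" using L2 w0 by simp
      hence "\<forall>i\<in>{1..q}. (w i)^2 = 0" using sum_nonneg_eq_0_iff[of "{1..q}" "\<lambda>i. (w i)^2"] by simp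
      hence wi: "\<forall>i\<in>{1..q}. w i = 0" by simp
      have "w = ?z"
      proof
        fix i
        have wV': "(\<forall>i. q < i \<longrightarrow> w i = 0)" using wV unfolding Vsp_iff by blast
        show "w i = 0" using wi wV' w0 by (cases "i = 0"; cases "i \<le> q") auto
      qed
      thus "w \<in> {?z}" by simp
    qed
    show "{?z} \<subseteq> What q \<gamma> \<delta> eps k" using Wh zl by (simp add: W1_def)
  qed
  have "Wcirc q \<gamma> \<delta> eps k \<noteq> {}" using zl zero_int by (auto simp: Wcirc_def)
  hence Wc: "Wcirc q \<gamma> \<delta> eps k = What q \<gamma> \<delta> eps k" by (rule Wcirc_eq)
  have Wqq: "\<gamma> q < 0 \<longrightarrow> Wq q \<gamma> \<delta> eps k = What q \<gamma> \<delta> eps k"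
    using G(1)[OF invq_Lam zl] by (auto simp: Wq_def)
  show ?thesis using Li Lz Wz Wc Wh Wqq by simp
qed

end

context cf begin

lemma C1: assumes s: "singLagrangian q \<gamma> \<delta> eps k" and W: "Wset q \<gamma> eps k \<noteq> {}"
  shows "let C = (if \<gamma> q < 0 then {Wcirc q \<gamma> \<delta> eps k, W1 q \<gamma> \<delta> eps k, Wq q \<gamma> \<delta> eps k}
                 else {Wcirc q \<gamma> \<delta> eps k, W1 q \<gamma> \<delta> eps k})
        in What q \<gamma> \<delta> eps k \<in> C \<and> What q \<gamma> \<delta> eps k \<noteq> {} \<and>
           (\<forall>X\<in>C. X \<noteq> {} \<longrightarrow> X = What q \<gamma> \<delta> eps k)"
proof -
  have o: "(What q \<gamma> \<delta> eps k = Wcirc q \<gamma> \<delta> eps k \<and> Wcirc q \<gamma> \<delta> eps k \<noteq> {}) \<or>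
         (What q \<gamma> \<delta> eps k = W1 q \<gamma> \<delta> eps k \<and> W1 q \<gamma> \<delta> eps k \<noteq> {}) \<or>
         (\<gamma> q < 0 \<and> What q \<gamma> \<delta> eps k = Wq q \<gamma> \<delta> eps k \<and> Wq q \<gamma> \<delta> eps k \<noteq> {})"
    by (rule outcome[OF s W])
  have u: "X \<noteq> {} \<longrightarrow> X = What q \<gamma> \<delta> eps k"
    if "X \<in> (if \<gamma> q < 0 then {Wcirc q \<gamma> \<delta> eps k, W1 q \<gamma> \<delta> eps k, Wq q \<gamma> \<delta> eps k}
                 else {Wcirc q \<gamma> \<delta> eps k, W1 q \<gamma> \<delta> eps k})" for X
    using that Wcirc_eq W1_What Wq_What by (auto split: if_splits)
  show ?thesis unfolding Let_def using o u by (auto split: if_splits)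
qed

lemma C2: assumes s: "singLagrangian q \<gamma> \<delta> eps k" and W: "Wset q \<gamma> eps k \<noteq> {}"
  shows "\<gamma> q > 0 \<longrightarrow>
          finf q \<gamma> \<delta> eps k < 0 \<and>
          (fsup q \<gamma> \<delta> eps k > 0 \<longrightarrow> What q \<gamma> \<delta> eps k = Wcirc q \<gamma> \<delta> eps k) \<and>
          (fsup q \<gamma> \<delta> eps k \<le> 0 \<longrightarrow> What q \<gamma> \<delta> eps k = W1 q \<gamma> \<delta> eps k)"
proof
  assume gq: "\<gamma> q > 0"
  have ek: "eps > 0 \<or> k > 0" using kpos[OF gq _ W s] epos by force
  have neg: "\<exists>l\<in>interior (LamSet q \<gamma>). ff q \<gamma> \<delta> eps k l < 0" using an2[OF gq ek] .
  have a: "fsup q \<gamma> \<delta> eps k > 0 \<longrightarrow> What q \<gamma> \<delta> eps k = Wcirc q \<gamma> \<delta> eps k"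
    using hc[OF neg] fsup_gt by blast
  have b: "fsup q \<gamma> \<delta> eps k \<le> 0 \<longrightarrow> What q \<gamma> \<delta> eps k = W1 q \<gamma> \<delta> eps k"
  proof
    assume "fsup q \<gamma> \<delta> eps k \<le> 0"
    hence "\<not> (fsup q \<gamma> \<delta> eps k > 0)" by simp
    hence "\<not> (\<exists>l\<in>interior (LamSet q \<gamma>). ff q \<gamma> \<delta> eps k l > 0)" using fsup_gt by blast
    hence "\<forall>l\<in>interior (LamSet q \<gamma>). ff q \<gamma> \<delta> eps k l \<le> 0" by (auto simp: not_less)
    thus "What q \<gamma> \<delta> eps k = W1 q \<gamma> \<delta> eps k" using h1 by blast
  qed
  show "finf q \<gamma> \<delta> eps k < 0 \<and>
          (fsup q \<gamma> \<delta> eps k > 0 \<longrightarrow> What q \<gamma> \<delta> eps k = Wcirc q \<gamma> \<delta> eps k) \<and>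
          (fsup q \<gamma> \<delta> eps k \<le> 0 \<longrightarrow> What q \<gamma> \<delta> eps k = W1 q \<gamma> \<delta> eps k)"
    using neg finf_lt a b by blast
qed

lemma C3: "\<gamma> q < 0 \<longrightarrow>
          (finf q \<gamma> \<delta> eps k < 0 \<and> 0 < fsup q \<gamma> \<delta> eps k \<longrightarrow>
              What q \<gamma> \<delta> eps k = Wcirc q \<gamma> \<delta> eps k) \<and>
          (fsup q \<gamma> \<delta> eps k \<le> 0 \<longrightarrow> What q \<gamma> \<delta> eps k = W1 q \<gamma> \<delta> eps k) \<and>
          (finf q \<gamma> \<delta> eps k \<ge> 0 \<longrightarrow> What q \<gamma> \<delta> eps k = Wq q \<gamma> \<delta> eps k)"
proof
  assume gq: "\<gamma> q < 0"
  have a: "finf q \<gamma> \<delta> eps k < 0 \<and> 0 < fsup q \<gamma> \<delta> eps k \<longrightarrow> What q \<gamma> \<delta> eps k = Wcirc q \<gamma> \<delta> eps k"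
    using hc finf_lt fsup_gt by blast
  have b: "fsup q \<gamma> \<delta> eps k \<le> 0 \<longrightarrow> What q \<gamma> \<delta> eps k = W1 q \<gamma> \<delta> eps k"
  proof
    assume "fsup q \<gamma> \<delta> eps k \<le> 0"
    hence "\<not> (fsup q \<gamma> \<delta> eps k > 0)" by simp
    hence "\<not> (\<exists>l\<in>interior (LamSet q \<gamma>). ff q \<gamma> \<delta> eps k l > 0)" using fsup_gt by blast
    hence "\<forall>l\<in>interior (LamSet q \<gamma>). ff q \<gamma> \<delta> eps k l \<le> 0" by (auto simp: not_less)
    thus "What q \<gamma> \<delta> eps k = W1 q \<gamma> \<delta> eps k" using h1 by blast
  qed
  have c: "finf q \<gamma> \<delta> eps k \<ge> 0 \<longrightarrow> What q \<gamma> \<delta> eps k = Wq q \<gamma> \<delta> eps k"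
  proof
    assume "finf q \<gamma> \<delta> eps k \<ge> 0"
    hence "\<not> (finf q \<gamma> \<delta> eps k < 0)" by simp
    hence "\<not> (\<exists>l\<in>interior (LamSet q \<gamma>). ff q \<gamma> \<delta> eps k l < 0)" using finf_lt by blast
    hence "\<forall>l\<in>interior (LamSet q \<gamma>). ff q \<gamma> \<delta> eps k l \<ge> 0" by (auto simp: not_less)
    thus "What q \<gamma> \<delta> eps k = Wq q \<gamma> \<delta> eps k" using hq[OF gq] by blast
  qed
  show "(finf q \<gamma> \<delta> eps k < 0 \<and> 0 < fsup q \<gamma> \<delta> eps k \<longrightarrow>
              What q \<gamma> \<delta> eps k = Wcirc q \<gamma> \<delta> eps k) \<and>
          (fsup q \<gamma> \<delta> eps k \<le> 0 \<longrightarrow> What q \<gamma> \<delta> eps k = W1 q \<gamma> \<delta> eps k) \<and>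
          (finf q \<gamma> \<delta> eps k \<ge> 0 \<longrightarrow> What q \<gamma> \<delta> eps k = Wq q \<gamma> \<delta> eps k)" using a b c by blast
qed

lemma What_ne: assumes s: "singLagrangian q \<gamma> \<delta> eps k" and W: "Wset q \<gamma> eps k \<noteq> {}"
  shows "What q \<gamma> \<delta> eps k \<noteq> {}"
  using outcome[OF s W] by auto

lemma C4: assumes s: "singLagrangian q \<gamma> \<delta> eps k" and W: "Wset q \<gamma> eps k \<noteq> {}"
  shows "What q \<gamma> \<delta> eps k = Wcirc q \<gamma> \<delta> eps k \<longrightarrow>
          (\<exists>!lam. lam \<in> interior (LamSet q \<gamma>) \<and> ff q \<gamma> \<delta> eps k lam = 0) \<and>
          (\<forall>lam\<in>interior (LamSet q \<gamma>). ff q \<gamma> \<delta> eps k lam = 0 \<longrightarrow>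
             Linf q \<gamma> \<delta> eps k = lam^2 * ((lc \<gamma> \<delta> eps 0)^2 +
                 (\<Sum>i=1..q. inverse ((1 - lam * \<gamma> i)^2) * (lc \<gamma> \<delta> eps i)^2)) \<and>
             What q \<gamma> \<delta> eps k = {wlam q \<gamma> \<delta> eps lam})"
proof
  assume Wc: "What q \<gamma> \<delta> eps k = Wcirc q \<gamma> \<delta> eps k"
  have zero: "What q \<gamma> \<delta> eps k = {wlam q \<gamma> \<delta> eps l} \<and> Linf q \<gamma> \<delta> eps k = Lf q \<delta> eps (wlam q \<gamma> \<delta> eps l)"
    if l: "l \<in> interior (LamSet q \<gamma>)" "ff q \<gamma> \<delta> eps k l = 0" for l
  proof -
    have Wl: "Wlam q \<gamma> \<delta> eps k l = {wlam q \<gamma> \<delta> eps l}" using Wlam_int[OF l(1)] l(2) by simp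
    hence m: "wlam q \<gamma> \<delta> eps l \<in> Wlam q \<gamma> \<delta> eps k l" by simp
    show ?thesis using G[OF subsetD[OF int_sub l(1)] m] Wl by simp
  qed
  have "Wcirc q \<gamma> \<delta> eps k \<noteq> {}" using What_ne[OF s W] Wc by simp
  then obtain l w where l: "l \<in> interior (LamSet q \<gamma>)" and w: "w \<in> Wlam q \<gamma> \<delta> eps k l"
    by (auto simp: Wcirc_def)
  have fl: "ff q \<gamma> \<delta> eps k l = 0" using w Wlam_int[OF l] by (auto split: if_splits)
  have uniq: "l' = l" if l': "l' \<in> interior (LamSet q \<gamma>)" "ff q \<gamma> \<delta> eps k l' = 0" for l'
  proof (rule ccontr)
    assume ne: "l' \<noteq> l"
    have a: "What q \<gamma> \<delta> eps k = {wlam q \<gamma> \<delta> eps l'}" using zero[OF l'] by simp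
    have b: "What q \<gamma> \<delta> eps k = {wlam q \<gamma> \<delta> eps l}" using zero[OF l fl] by simp
    have "wlam q \<gamma> \<delta> eps l' \<in> Wlam q \<gamma> \<delta> eps k l'" using Wlam_int[OF l'(1)] l'(2) by simp
    moreover have "wlam q \<gamma> \<delta> eps l \<in> Wlam q \<gamma> \<delta> eps k l" using Wlam_int[OF l] fl by simp
    moreover have "wlam q \<gamma> \<delta> eps l' = wlam q \<gamma> \<delta> eps l" using a b by simp
    ultimately have "multLagrangian q \<gamma> \<delta> eps k" using two_lam[OF ne] by simp
    thus False using s by (simp add: singLagrangian_def)
  qed
  show "(\<exists>!lam. lam \<in> interior (LamSet q \<gamma>) \<and> ff q \<gamma> \<delta> eps k lam = 0) \<and>
          (\<forall>lam\<in>interior (LamSet q \<gamma>). ff q \<gamma> \<delta> eps k lam = 0 \<longrightarrow>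
             Linf q \<gamma> \<delta> eps k = lam^2 * ((lc \<gamma> \<delta> eps 0)^2 +
                 (\<Sum>i=1..q. inverse ((1 - lam * \<gamma> i)^2) * (lc \<gamma> \<delta> eps i)^2)) \<and>
             What q \<gamma> \<delta> eps k = {wlam q \<gamma> \<delta> eps lam})"
  proof
    show "\<exists>!lam. lam \<in> interior (LamSet q \<gamma>) \<and> ff q \<gamma> \<delta> eps k lam = 0"
    proof (rule ex1I[of _ l])
      show "l \<in> interior (LamSet q \<gamma>) \<and> ff q \<gamma> \<delta> eps k l = 0" using l fl by simp
      fix l' assume "l' \<in> interior (LamSet q \<gamma>) \<and> ff q \<gamma> \<delta> eps k l' = 0"
      thus "l' = l" using uniq by blast
    qed
    show "\<forall>lam\<in>interior (LamSet q \<gamma>). ff q \<gamma> \<delta> eps k lam = 0 \<longrightarrow>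
             Linf q \<gamma> \<delta> eps k = lam^2 * ((lc \<gamma> \<delta> eps 0)^2 +
                 (\<Sum>i=1..q. inverse ((1 - lam * \<gamma> i)^2) * (lc \<gamma> \<delta> eps i)^2)) \<and>
             What q \<gamma> \<delta> eps k = {wlam q \<gamma> \<delta> eps lam}"
    proof (intro ballI impI)
      fix lam assume a: "lam \<in> interior (LamSet q \<gamma>)" "ff q \<gamma> \<delta> eps k lam = 0"
      have z: "What q \<gamma> \<delta> eps k = {wlam q \<gamma> \<delta> eps lam}"
        "Linf q \<gamma> \<delta> eps k = Lf q \<delta> eps (wlam q \<gamma> \<delta> eps lam)" using zero[OF a] by auto
      show "Linf q \<gamma> \<delta> eps k = lam^2 * ((lc \<gamma> \<delta> eps 0)^2 +
                 (\<Sum>i=1..q. inverse ((1 - lam * \<gamma> i)^2) * (lc \<gamma> \<delta> eps i)^2)) \<and>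
             What q \<gamma> \<delta> eps k = {wlam q \<gamma> \<delta> eps lam}"
        using z Lf_wlam[OF a(1)] by simp
    qed
  qed
qed

lemma C5: assumes s: "singLagrangian q \<gamma> \<delta> eps k" and W: "Wset q \<gamma> eps k \<noteq> {}"
  shows "What q \<gamma> \<delta> eps k = W1 q \<gamma> \<delta> eps k \<longrightarrow>
          (let \<zeta> = sqrt (- f1 q \<gamma> \<delta> eps k / \<gamma> 1) in
             \<zeta> \<ge> 0 \<and>
             Linf q \<gamma> \<delta> eps k = inverse ((\<gamma> 1)^2) * ((lc \<gamma> \<delta> eps 0)^2 +
                 (\<Sum>i=2..q. inverse ((1 - \<gamma> i / \<gamma> 1)^2) * (lc \<gamma> \<delta> eps i)^2)) + \<zeta>^2 \<and>
             What q \<gamma> \<delta> eps k = {pt1 q \<gamma> \<delta> eps \<zeta>, pt1 q \<gamma> \<delta> eps (- \<zeta>)})"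
proof
  assume Wh: "What q \<gamma> \<delta> eps k = W1 q \<gamma> \<delta> eps k"
  hence "W1 q \<gamma> \<delta> eps k \<noteq> {}" using What_ne[OF s W] by simp
  hence d: "\<delta> 1 = 0" and f: "f1 q \<gamma> \<delta> eps k \<le> 0" using W1_ne by auto
  define z where "z = sqrt (- f1 q \<gamma> \<delta> eps k / \<gamma> 1)"
  have z0: "z \<ge> 0" using f g1 by (simp add: z_def divide_nonpos_pos)
  have W1s: "W1 q \<gamma> \<delta> eps k = {pt1 q \<gamma> \<delta> eps z, pt1 q \<gamma> \<delta> eps (- z)}" using W1_set[OF d f] by (simp add: z_def)
  have m: "pt1 q \<gamma> \<delta> eps z \<in> Wlam q \<gamma> \<delta> eps k (inverse (\<gamma> 1))" using W1s by (simp add: W1_def)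
  have Li: "Linf q \<gamma> \<delta> eps k = Lf q \<delta> eps (pt1 q \<gamma> \<delta> eps z)" using G(2)[OF inv1_Lam m] .
  show "let \<zeta> = sqrt (- f1 q \<gamma> \<delta> eps k / \<gamma> 1) in
             \<zeta> \<ge> 0 \<and>
             Linf q \<gamma> \<delta> eps k = inverse ((\<gamma> 1)^2) * ((lc \<gamma> \<delta> eps 0)^2 +
                 (\<Sum>i=2..q. inverse ((1 - \<gamma> i / \<gamma> 1)^2) * (lc \<gamma> \<delta> eps i)^2)) + \<zeta>^2 \<and>
             What q \<gamma> \<delta> eps k = {pt1 q \<gamma> \<delta> eps \<zeta>, pt1 q \<gamma> \<delta> eps (- \<zeta>)}"
    unfolding Let_def z_def[symmetric] using z0 Li Lf_pt1[OF d] Wh W1s by simp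
qed

lemma C6: assumes ne: "What q \<gamma> \<delta> eps k \<noteq> {}" shows "\<gamma> q < 0 \<and> What q \<gamma> \<delta> eps k = Wq q \<gamma> \<delta> eps k \<longrightarrow>
          (let \<zeta> = sqrt (fq q \<gamma> \<delta> eps k / (- \<gamma> q)) in
             \<zeta> \<ge> 0 \<and>
             Linf q \<gamma> \<delta> eps k = inverse ((\<gamma> q)^2) * ((lc \<gamma> \<delta> eps 0)^2 +
                 (\<Sum>i=1..q-1. inverse ((1 - \<gamma> i / \<gamma> q)^2) * (lc \<gamma> \<delta> eps i)^2)) + \<zeta>^2 \<and>
             What q \<gamma> \<delta> eps k = {ptq q \<gamma> \<delta> eps \<zeta>, ptq q \<gamma> \<delta> eps (- \<zeta>)})"
proof (intro impI)
  assume a: "\<gamma> q < 0 \<and> What q \<gamma> \<delta> eps k = Wq q \<gamma> \<delta> eps k"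
  have gq: "\<gamma> q < 0" and Wh: "What q \<gamma> \<delta> eps k = Wq q \<gamma> \<delta> eps k" using a by auto
  hence "Wq q \<gamma> \<delta> eps k \<noteq> {}" using ne by simp
  hence d: "\<delta> q = 0" and f: "fq q \<gamma> \<delta> eps k \<ge> 0" using Wq_ne[OF gq] by auto
  define z where "z = sqrt (fq q \<gamma> \<delta> eps k / (- \<gamma> q))"
  have "fq q \<gamma> \<delta> eps k / (- \<gamma> q) \<ge> 0" using f gq by (intro divide_nonneg_pos) auto
  hence z0: "z \<ge> 0" by (simp add: z_def)
  have Wqs: "Wq q \<gamma> \<delta> eps k = {ptq q \<gamma> \<delta> eps z, ptq q \<gamma> \<delta> eps (- z)}" using Wq_set[OF gq d f] by (simp add: z_def)
  have m: "ptq q \<gamma> \<delta> eps z \<in> Wlam q \<gamma> \<delta> eps k (inverse (\<gamma> q))" using Wqs by (simp add: Wq_def)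
  have Li: "Linf q \<gamma> \<delta> eps k = Lf q \<delta> eps (ptq q \<gamma> \<delta> eps z)" using G(2)[OF invq_Lam[OF gq] m] .
  show "let \<zeta> = sqrt (fq q \<gamma> \<delta> eps k / (- \<gamma> q)) in
             \<zeta> \<ge> 0 \<and>
             Linf q \<gamma> \<delta> eps k = inverse ((\<gamma> q)^2) * ((lc \<gamma> \<delta> eps 0)^2 +
                 (\<Sum>i=1..q-1. inverse ((1 - \<gamma> i / \<gamma> q)^2) * (lc \<gamma> \<delta> eps i)^2)) + \<zeta>^2 \<and>
             What q \<gamma> \<delta> eps k = {ptq q \<gamma> \<delta> eps \<zeta>, ptq q \<gamma> \<delta> eps (- \<zeta>)}"
    unfolding Let_def z_def[symmetric] using z0 Li Lf_ptq[OF gq d] Wh Wqs by simp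
qed

end


context cf begin
lemma sing_all: assumes s: "singLagrangian q \<gamma> \<delta> eps k" and W: "Wset q \<gamma> eps k \<noteq> {}"
  shows "
       (let C = (if \<gamma> q < 0 then {Wcirc q \<gamma> \<delta> eps k, W1 q \<gamma> \<delta> eps k, Wq q \<gamma> \<delta> eps k}
                 else {Wcirc q \<gamma> \<delta> eps k, W1 q \<gamma> \<delta> eps k})
        in What q \<gamma> \<delta> eps k \<in> C \<and> What q \<gamma> \<delta> eps k \<noteq> {} \<and>
           (\<forall>X\<in>C. X \<noteq> {} \<longrightarrow> X = What q \<gamma> \<delta> eps k))
     \<and> (\<gamma> q > 0 \<longrightarrow>
          finf q \<gamma> \<delta> eps k < 0 \<and>
          (fsup q \<gamma> \<delta> eps k > 0 \<longrightarrow> What q \<gamma> \<delta> eps k = Wcirc q \<gamma> \<delta> eps k) \<and>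
          (fsup q \<gamma> \<delta> eps k \<le> 0 \<longrightarrow> What q \<gamma> \<delta> eps k = W1 q \<gamma> \<delta> eps k))
     \<and> (\<gamma> q < 0 \<longrightarrow>
          (finf q \<gamma> \<delta> eps k < 0 \<and> 0 < fsup q \<gamma> \<delta> eps k \<longrightarrow>
              What q \<gamma> \<delta> eps k = Wcirc q \<gamma> \<delta> eps k) \<and>
          (fsup q \<gamma> \<delta> eps k \<le> 0 \<longrightarrow> What q \<gamma> \<delta> eps k = W1 q \<gamma> \<delta> eps k) \<and>
          (finf q \<gamma> \<delta> eps k \<ge> 0 \<longrightarrow> What q \<gamma> \<delta> eps k = Wq q \<gamma> \<delta> eps k))
     \<and> (What q \<gamma> \<delta> eps k = Wcirc q \<gamma> \<delta> eps k \<longrightarrow>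
          (\<exists>!lam. lam \<in> interior (LamSet q \<gamma>) \<and> ff q \<gamma> \<delta> eps k lam = 0) \<and>
          (\<forall>lam\<in>interior (LamSet q \<gamma>). ff q \<gamma> \<delta> eps k lam = 0 \<longrightarrow>
             Linf q \<gamma> \<delta> eps k = lam^2 * ((lc \<gamma> \<delta> eps 0)^2 +
                 (\<Sum>i=1..q. inverse ((1 - lam * \<gamma> i)^2) * (lc \<gamma> \<delta> eps i)^2)) \<and>
             What q \<gamma> \<delta> eps k = {wlam q \<gamma> \<delta> eps lam}))
     \<and> (What q \<gamma> \<delta> eps k = W1 q \<gamma> \<delta> eps k \<longrightarrow>
          (let \<zeta> = sqrt (- f1 q \<gamma> \<delta> eps k / \<gamma> 1) in
             \<zeta> \<ge> 0 \<and>
             Linf q \<gamma> \<delta> eps k = inverse ((\<gamma> 1)^2) * ((lc \<gamma> \<delta> eps 0)^2 +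
                 (\<Sum>i=2..q. inverse ((1 - \<gamma> i / \<gamma> 1)^2) * (lc \<gamma> \<delta> eps i)^2)) + \<zeta>^2 \<and>
             What q \<gamma> \<delta> eps k = {pt1 q \<gamma> \<delta> eps \<zeta>, pt1 q \<gamma> \<delta> eps (- \<zeta>)}))
     \<and> (\<gamma> q < 0 \<and> What q \<gamma> \<delta> eps k = Wq q \<gamma> \<delta> eps k \<longrightarrow>
          (let \<zeta> = sqrt (fq q \<gamma> \<delta> eps k / (- \<gamma> q)) in
             \<zeta> \<ge> 0 \<and>
             Linf q \<gamma> \<delta> eps k = inverse ((\<gamma> q)^2) * ((lc \<gamma> \<delta> eps 0)^2 +
                 (\<Sum>i=1..q-1. inverse ((1 - \<gamma> i / \<gamma> q)^2) * (lc \<gamma> \<delta> eps i)^2)) + \<zeta>^2 \<and>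
             What q \<gamma> \<delta> eps k = {ptq q \<gamma> \<delta> eps \<zeta>, ptq q \<gamma> \<delta> eps (- \<zeta>)}))"
  by (rule conjI[OF C1[OF s W] conjI[OF C2[OF s W] conjI[OF C3 conjI[OF C4[OF s W] conjI[OF C5[OF s W] C6[OF What_ne[OF s W]]]]]]])
end

theorem theorem8p1:
  fixes q :: nat and \<gamma> \<delta> :: "nat \<Rightarrow> real" and k eps :: real
  assumes q: "q \<ge> 1"
    and dec: "\<forall>i j. 1 \<le> i \<longrightarrow> i < j \<longrightarrow> j \<le> q \<longrightarrow> \<gamma> j < \<gamma> i"
    and nz: "\<forall>i\<in>{1..q}. \<gamma> i \<noteq> 0"
    and g1: "\<gamma> 1 > 0"
    and dpos: "\<forall>i\<in>{1..q}. \<delta> i \<ge> 0"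
    and epos: "eps \<ge> 0"
    and Wne: "Wset q \<gamma> eps k \<noteq> {}"
  shows
   "(nonLagrangian q \<gamma> \<delta> eps k \<longrightarrow>
       Wcirc q \<gamma> \<delta> eps k = {} \<and> W1 q \<gamma> \<delta> eps k = {} \<and>
       Wset q \<gamma> eps k = {(\<lambda>_. 0)} \<and>
       Linf q \<gamma> \<delta> eps k = (\<Sum>i=1..q. inverse ((\<gamma> i)^2) * (lc \<gamma> \<delta> eps i)^2) \<and>
       Linf q \<gamma> \<delta> eps k > 0 \<and>
       What q \<gamma> \<delta> eps k = {(\<lambda>_. 0)})
  \<and> (multLagrangian q \<gamma> \<delta> eps k \<longrightarrow>
       Linf q \<gamma> \<delta> eps k = 0 \<and>
       What q \<gamma> \<delta> eps k = {(\<lambda>_. 0)} \<and> Wcirc q \<gamma> \<delta> eps k = {(\<lambda>_. 0)} \<and>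
       W1 q \<gamma> \<delta> eps k = {(\<lambda>_. 0)} \<and>
       (\<gamma> q < 0 \<longrightarrow> Wq q \<gamma> \<delta> eps k = {(\<lambda>_. 0)}))
  \<and> (singLagrangian q \<gamma> \<delta> eps k \<longrightarrow>
       (let C = (if \<gamma> q < 0 then {Wcirc q \<gamma> \<delta> eps k, W1 q \<gamma> \<delta> eps k, Wq q \<gamma> \<delta> eps k}
                 else {Wcirc q \<gamma> \<delta> eps k, W1 q \<gamma> \<delta> eps k})
        in What q \<gamma> \<delta> eps k \<in> C \<and> What q \<gamma> \<delta> eps k \<noteq> {} \<and>
           (\<forall>X\<in>C. X \<noteq> {} \<longrightarrow> X = What q \<gamma> \<delta> eps k))
     \<and> (\<gamma> q > 0 \<longrightarrow>
          finf q \<gamma> \<delta> eps k < 0 \<and>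
          (fsup q \<gamma> \<delta> eps k > 0 \<longrightarrow> What q \<gamma> \<delta> eps k = Wcirc q \<gamma> \<delta> eps k) \<and>
          (fsup q \<gamma> \<delta> eps k \<le> 0 \<longrightarrow> What q \<gamma> \<delta> eps k = W1 q \<gamma> \<delta> eps k))
     \<and> (\<gamma> q < 0 \<longrightarrow>
          (finf q \<gamma> \<delta> eps k < 0 \<and> 0 < fsup q \<gamma> \<delta> eps k \<longrightarrow>
              What q \<gamma> \<delta> eps k = Wcirc q \<gamma> \<delta> eps k) \<and>
          (fsup q \<gamma> \<delta> eps k \<le> 0 \<longrightarrow> What q \<gamma> \<delta> eps k = W1 q \<gamma> \<delta> eps k) \<and>
          (finf q \<gamma> \<delta> eps k \<ge> 0 \<longrightarrow> What q \<gamma> \<delta> eps k = Wq q \<gamma> \<delta> eps k))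
     \<and> (What q \<gamma> \<delta> eps k = Wcirc q \<gamma> \<delta> eps k \<longrightarrow>
          (\<exists>!lam. lam \<in> interior (LamSet q \<gamma>) \<and> ff q \<gamma> \<delta> eps k lam = 0) \<and>
          (\<forall>lam\<in>interior (LamSet q \<gamma>). ff q \<gamma> \<delta> eps k lam = 0 \<longrightarrow>
             Linf q \<gamma> \<delta> eps k = lam^2 * ((lc \<gamma> \<delta> eps 0)^2 +
                 (\<Sum>i=1..q. inverse ((1 - lam * \<gamma> i)^2) * (lc \<gamma> \<delta> eps i)^2)) \<and>
             What q \<gamma> \<delta> eps k = {wlam q \<gamma> \<delta> eps lam}))
     \<and> (What q \<gamma> \<delta> eps k = W1 q \<gamma> \<delta> eps k \<longrightarrow>
          (let \<zeta> = sqrt (- f1 q \<gamma> \<delta> eps k / \<gamma> 1) in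
             \<zeta> \<ge> 0 \<and>
             Linf q \<gamma> \<delta> eps k = inverse ((\<gamma> 1)^2) * ((lc \<gamma> \<delta> eps 0)^2 +
                 (\<Sum>i=2..q. inverse ((1 - \<gamma> i / \<gamma> 1)^2) * (lc \<gamma> \<delta> eps i)^2)) + \<zeta>^2 \<and>
             What q \<gamma> \<delta> eps k = {pt1 q \<gamma> \<delta> eps \<zeta>, pt1 q \<gamma> \<delta> eps (- \<zeta>)}))
     \<and> (\<gamma> q < 0 \<and> What q \<gamma> \<delta> eps k = Wq q \<gamma> \<delta> eps k \<longrightarrow>
          (let \<zeta> = sqrt (fq q \<gamma> \<delta> eps k / (- \<gamma> q)) in
             \<zeta> \<ge> 0 \<and>
             Linf q \<gamma> \<delta> eps k = inverse ((\<gamma> q)^2) * ((lc \<gamma> \<delta> eps 0)^2 +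
                 (\<Sum>i=1..q-1. inverse ((1 - \<gamma> i / \<gamma> q)^2) * (lc \<gamma> \<delta> eps i)^2)) + \<zeta>^2 \<and>
             What q \<gamma> \<delta> eps k = {ptq q \<gamma> \<delta> eps \<zeta>, ptq q \<gamma> \<delta> eps (- \<zeta>)})))"
proof -
  interpret cf q \<gamma> \<delta> k eps using q dec nz g1 dpos epos by unfold_locales
  show ?thesis by (rule conjI[OF impI[OF partA] conjI[OF impI[OF partB] impI[OF sing_all[OF _ Wne]]]])
qed

end
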